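(* Let $I$ be an infinite set of positive integers and for $i \in I$ let $G_i$ be a finite group and $H_i \le G_i$ a subgroup, with $|G_i| \to \infty$. Suppose there is a constant $c>0$ with $|H_i| \le (\log|G_i|)^c$ for all $i \in I$. Then the family $(G_i,H_i)_{i \in I}$ is distinguishable if and only if there is a constant $c'>0$ such that, for all sufficiently large $i \in I$, $H_i$ contains a non-identity element $h$ whose conjugacy class $h^{G_i}$ in $G_i$ satisfies $|h^{G_i}| \le (\log|G_i|)^{c'}$.
   Context: For a finite group $G$, let $\mathrm{Irr}(G)$ be its set of complex irreducible characters and $d_\chi=\chi(e)$. For $H \le G$ let $D_H = \frac{1}{|G|}\sum_{\chi \in \mathrm{Irr}(G)} d_\chi \big|\sum_{h \in H, h \neq e}\chi(h)\big|$ (the $L_1$ distance between the distributions $P_H(\chi)=\frac{d_\chi}{|G|}\sum_{h\in H}\chi(h)$ and $P_{\{e\}}$ on $\mathrm{Irr}(G)$ produced by weak quantum Fourier sampling). A family $(G_i,H_i)_{i \in I}$ with $H_i \le G_i$, $I$ an infinite set of positive integers and $|G_i| \to \infty$, is called distinguishable if there is a constant $c''>0$ such that $D_{H_i} \ge (\log|G_i|)^{-c''}$ for all sufficiently large $i \in I$, and indistinguishable otherwise. *)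

theory Defs
  imports "HOL-Algebra.Group" "Jordan_Normal_Form.Matrix" Complex_Main
begin

definition mat_trace :: "complex mat \<Rightarrow> complex" where
  "mat_trace A = (\<Sum>i<dim_row A. A $$ (i, i))"

definition is_rep :: "('a, 'b) monoid_scheme \<Rightarrow> nat \<Rightarrow> ('a \<Rightarrow> complex mat) \<Rightarrow> bool" where
  "is_rep G n \<rho> \<longleftrightarrow> n \<ge> 1 \<and>
     (\<forall>g \<in> carrier G. \<rho> g \<in> carrier_mat n n) \<and>
     \<rho> \<one>\<^bsub>G\<^esub> = 1\<^sub>m n \<and>
     (\<forall>g \<in> carrier G. \<forall>h \<in> carrier G. \<rho> (g \<otimes>\<^bsub>G\<^esub> h) = \<rho> g * \<rho> h)"

definition is_subspace :: "nat \<Rightarrow> complex vec set \<Rightarrow> bool" where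
  "is_subspace n W \<longleftrightarrow> W \<subseteq> carrier_vec n \<and> 0\<^sub>v n \<in> W \<and>
     (\<forall>v \<in> W. \<forall>w \<in> W. v + w \<in> W) \<and> (\<forall>c. \<forall>v \<in> W. c \<cdot>\<^sub>v v \<in> W)"

definition is_irr_rep :: "('a, 'b) monoid_scheme \<Rightarrow> nat \<Rightarrow> ('a \<Rightarrow> complex mat) \<Rightarrow> bool" where
  "is_irr_rep G n \<rho> \<longleftrightarrow> is_rep G n \<rho> \<and>
     (\<forall>W. is_subspace n W \<and> (\<forall>g \<in> carrier G. \<forall>v \<in> W. \<rho> g *\<^sub>v v \<in> W)
          \<longrightarrow> W = {0\<^sub>v n} \<or> W = carrier_vec n)"

definition character :: "('a, 'b) monoid_scheme \<Rightarrow> ('a \<Rightarrow> complex mat) \<Rightarrow> 'a \<Rightarrow> complex" where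
  "character G \<rho> = (\<lambda>g. if g \<in> carrier G then mat_trace (\<rho> g) else 0)"

text \<open>Irr(G): the set of complex irreducible characters (isomorphic representations give
  the same function, so each irreducible character appears once).\<close>
definition Irr :: "('a, 'b) monoid_scheme \<Rightarrow> ('a \<Rightarrow> complex) set" where
  "Irr G = {character G \<rho> | n \<rho>. is_irr_rep G n \<rho>}"

definition D_H :: "('a, 'b) monoid_scheme \<Rightarrow> 'a set \<Rightarrow> real" where
  "D_H G H = (1 / real (card (carrier G))) *
     (\<Sum>\<chi> \<in> Irr G. cmod (\<chi> \<one>\<^bsub>G\<^esub>) * cmod (\<Sum>h \<in> H - {\<one>\<^bsub>G\<^esub>}. \<chi> h))"

text \<open>Distinguishable family (indices in I, "for all sufficiently large i in I").
  Natural logarithm is used; the choice of base is immaterial.\<close>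
definition distinguishable :: "nat set \<Rightarrow> (nat \<Rightarrow> ('a, 'b) monoid_scheme) \<Rightarrow> (nat \<Rightarrow> 'a set) \<Rightarrow> bool" where
  "distinguishable I G H \<longleftrightarrow>
     (\<exists>c''>0. \<exists>N. \<forall>i \<in> I. i \<ge> N \<longrightarrow>
        D_H (G i) (H i) \<ge> (ln (real (card (carrier (G i))))) powr (- c''))"

definition conj_class :: "('a, 'b) monoid_scheme \<Rightarrow> 'a \<Rightarrow> 'a set" where
  "conj_class G h = {g \<otimes>\<^bsub>G\<^esub> h \<otimes>\<^bsub>G\<^esub> inv\<^bsub>G\<^esub> g | g. g \<in> carrier G}"

end

theory Submission
  imports Defs "Jordan_Normal_Form.Schur_Decomposition" "HOL-Algebra.Multiplicative_Group"
begin


lemma mult_entry: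
  assumes "A \<in> carrier_mat n m" "B \<in> carrier_mat m p" "i < n" "j < p"
  shows "(A * B) $$ (i,j) = (\<Sum>l<m. A $$ (i,l) * B $$ (l,j))"
  using assms by (auto simp: scalar_prod_def lessThan_atLeast0 intro!: sum.cong)

lemma mult_vec_entry:
  assumes "A \<in> carrier_mat n m" "v \<in> carrier_vec m" "i < n"
  shows "(A *\<^sub>v v) $ i = (\<Sum>l<m. A $$ (i,l) * v $ l)"
  using assms by (auto simp: scalar_prod_def lessThan_atLeast0 intro!: sum.cong)

lemma trace_mult_comm:
  assumes "A \<in> carrier_mat n m" "B \<in> carrier_mat m n"
  shows "mat_trace (A * B) = mat_trace (B * A)"
proof -
  have "mat_trace (A * B) = (\<Sum>i<n. \<Sum>l<m. A $$ (i,l) * B $$ (l,i))"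
    unfolding mat_trace_def using assms by (auto simp: scalar_prod_def lessThan_atLeast0 intro!: sum.cong)
  also have "\<dots> = (\<Sum>l<m. \<Sum>i<n. B $$ (l,i) * A $$ (i,l))"
    by (subst sum.swap) (simp add: mult.commute)
  also have "\<dots> = mat_trace (B * A)"
    unfolding mat_trace_def using assms by (auto simp: scalar_prod_def lessThan_atLeast0 intro!: sum.cong)
  finally show ?thesis .
qed

lemma trace_one[simp]: "mat_trace (1\<^sub>m n) = of_nat n"
  unfolding mat_trace_def by simp

lemma trace_smult: "A \<in> carrier_mat n n \<Longrightarrow> mat_trace (a \<cdot>\<^sub>m A) = a * mat_trace A"
  unfolding mat_trace_def by (simp add: sum_distrib_left)

lemma trace_similar:
  assumes "A \<in> carrier_mat n n" "P \<in> carrier_mat n n" "Q \<in> carrier_mat n n" "Q * P = 1\<^sub>m n"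
  shows "mat_trace (P * A * Q) = mat_trace A"
proof -
  have "mat_trace (P * A * Q) = mat_trace (Q * (P * A))"
    using assms by (intro trace_mult_comm[of _ n n]) auto
  also have "Q * (P * A) = (Q * P) * A" using assms by (simp add: assoc_mult_mat[of Q n n P n A n, symmetric])
  finally show ?thesis using assms by simp
qed

lemma ut_mult:
  assumes X: "X \<in> carrier_mat n n" and Y: "Y \<in> carrier_mat n n"
    and ux: "upper_triangular X" and uy: "upper_triangular Y"
  shows "upper_triangular (X * Y)" "\<And>i. i < n \<Longrightarrow> (X * Y) $$ (i,i) = X $$ (i,i) * Y $$ (i,i)"
proof -
  show "upper_triangular (X * Y)"
  proof
    fix i j assume ji: "j < i" and i: "i < dim_row (X * Y)"
    hence i': "i < n" using X by simp
    have "(X * Y) $$ (i,j) = (\<Sum>l<n. X $$ (i,l) * Y $$ (l,j))"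
      using mult_entry[OF X Y i'] ji i' by simp
    also have "\<dots> = 0"
    proof (rule sum.neutral, intro ballI)
      fix l assume l: "l \<in> {..<n}"
      show "X $$ (i,l) * Y $$ (l,j) = 0"
      proof (cases "l < i")
        case True thus ?thesis using upper_triangularD[OF ux True] X i' by simp
      next
        case False hence "j < l" using ji by simp
        thus ?thesis using upper_triangularD[OF uy] Y l by simp
      qed
    qed
    finally show "(X * Y) $$ (i,j) = 0" .
  qed
  fix i assume i: "i < n"
  have "(X * Y) $$ (i,i) = (\<Sum>l<n. X $$ (i,l) * Y $$ (l,i))"
    using mult_entry[OF X Y i i] .
  also have "\<dots> = (\<Sum>l\<in>{i}. X $$ (i,l) * Y $$ (l,i))"
  proof (rule sum.mono_neutral_right)
    show "\<forall>l\<in>{..<n} - {i}. X $$ (i,l) * Y $$ (l,i) = 0"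
    proof
      fix l assume l: "l \<in> {..<n} - {i}"
      show "X $$ (i,l) * Y $$ (l,i) = 0"
      proof (cases "l < i")
        case True thus ?thesis using upper_triangularD[OF ux True] X i by simp
      next
        case False hence il: "i < l" using l by auto
        show ?thesis using upper_triangularD[OF uy il] Y l by simp
      qed
    qed
  qed (use i in auto)
  finally show "(X * Y) $$ (i,i) = X $$ (i,i) * Y $$ (i,i)" by simp
qed

lemma ut_pow:
  assumes B: "B \<in> carrier_mat n n" and u: "upper_triangular B"
  shows "upper_triangular (B ^\<^sub>m k) \<and> (\<forall>i<n. (B ^\<^sub>m k) $$ (i,i) = (B $$ (i,i)) ^ k)"
proof (induction k)
  case 0 thus ?case using B by auto
next
  case (Suc k)
  have P: "B ^\<^sub>m k \<in> carrier_mat n n" using B by simp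
  show ?case using ut_mult[OF P B _ u] Suc.IH by (auto simp del: power_Suc simp: power_Suc2)
qed

lemma assoc4:
  assumes "Q \<in> carrier_mat n n" "P \<in> carrier_mat n n" "C \<in> carrier_mat n n"
  shows "Q * (P * C * Q) * P = (Q * P) * C * (Q * P)"
  using assms by (simp add: assoc_mult_mat[of _ n n _ n _ n])

lemma trace_pow_root_unity:
  fixes A :: "complex mat"
  assumes A: "A \<in> carrier_mat n n" and AN: "A ^\<^sub>m N = 1\<^sub>m n" and N: "N > 0"
  shows "mat_trace (A ^\<^sub>m (N - 1)) = cnj (mat_trace A)" "cmod (mat_trace A) \<le> n"
proof -
  obtain es where cp: "char_poly A = (\<Prod>a\<leftarrow>es. [:- a, 1:])" and len: "length es = n"
    using char_poly_factorized[OF A] by blast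
  obtain B P Q where sd: "schur_decomposition A es = (B,P,Q)" by (cases "schur_decomposition A es") auto
  from schur_decomposition[OF A cp sd] have wit: "similar_mat_wit A B P Q"
    and ut: "upper_triangular B" and dg: "diag_mat B = es" by auto
  note W = similar_mat_witD2[OF A wit]
  have Bc: "B \<in> carrier_mat n n" using W by auto
  have esi: "\<And>i. i < n \<Longrightarrow> es ! i = B $$ (i,i)" using dg Bc unfolding diag_mat_def by auto
  have trk: "mat_trace (A ^\<^sub>m k) = (\<Sum>i<n. (es ! i) ^ k)" for k
  proof -
    have "A ^\<^sub>m k = P * B ^\<^sub>m k * Q" using similar_mat_wit_pow_id[OF wit] .
    hence "mat_trace (A ^\<^sub>m k) = mat_trace (B ^\<^sub>m k)"
      using trace_similar[of "B ^\<^sub>m k" n P Q] W Bc by simp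
    also have "\<dots> = (\<Sum>i<n. (es ! i) ^ k)"
      unfolding mat_trace_def using ut_pow[OF Bc ut, of k] Bc esi by simp
    finally show ?thesis .
  qed
  have BN: "B ^\<^sub>m N = 1\<^sub>m n"
  proof -
    have "B ^\<^sub>m N = Q * (P * B ^\<^sub>m N * Q) * P"
    proof -
      have c: "B ^\<^sub>m N \<in> carrier_mat n n" using Bc by simp
      have h1: "Q * (P * B ^\<^sub>m N * Q) * P = (Q * P) * B ^\<^sub>m N * (Q * P)"
        by (rule assoc4) (use W c in auto)
      have h2: "(Q * P) * B ^\<^sub>m N * (Q * P) = B ^\<^sub>m N" using W c by simp
      show ?thesis by (simp only: h1 h2)
    qed
    also have "P * B ^\<^sub>m N * Q = 1\<^sub>m n" using similar_mat_wit_pow_id[OF wit, of N] AN by simp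
    finally show ?thesis using W by simp
  qed
  have eN: "(es ! i) ^ N = 1" if i: "i < n" for i
    using ut_pow[OF Bc ut, of N] BN esi[OF i] i by auto
  have e1: "cmod (es ! i) = 1" if i: "i < n" for i
  proof -
    have "cmod (es ! i) ^ N = 1" using eN[OF i] by (metis norm_one norm_power)
    thus ?thesis using N power_eq_imp_eq_base[of "cmod (es ! i)" N 1] by simp
  qed
  have einv: "(es ! i) ^ (N - 1) = cnj (es ! i)" if i: "i < n" for i
  proof -
    have ne: "es ! i \<noteq> 0" using e1[OF i] by auto
    have "(es ! i) ^ (N - 1) * es ! i = 1" using eN[OF i] N
      by (metis Suc_diff_1 power_Suc2)
    moreover have "cnj (es ! i) * es ! i = 1"
      using e1[OF i] by (metis complex_norm_square mult.commute of_real_1 power_one)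
    ultimately show ?thesis using ne by (metis mult_right_cancel)
  qed
  show "mat_trace (A ^\<^sub>m (N - 1)) = cnj (mat_trace A)"
    unfolding trk using trk[of 1] einv by (simp add: cnj_sum)
  have "cmod (mat_trace A) = cmod (\<Sum>i<n. es ! i)" using trk[of 1] by simp
  also have "\<dots> \<le> (\<Sum>i<n. cmod (es ! i))" by (rule norm_sum)
  also have "\<dots> = n" using e1 by simp
  finally show "cmod (mat_trace A) \<le> n" .
qed


definition li_mat :: "nat \<Rightarrow> nat \<Rightarrow> complex mat \<Rightarrow> bool" where
  "li_mat n m A \<longleftrightarrow> (\<forall>c\<in>carrier_vec m. A *\<^sub>v c = 0\<^sub>v n \<longrightarrow> c = 0\<^sub>v m)"

definition appcol :: "complex mat \<Rightarrow> complex vec \<Rightarrow> complex mat" where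
  "appcol A w = mat (dim_row A) (Suc (dim_col A)) (\<lambda>(i,j). if j < dim_col A then A $$ (i,j) else w $ i)"

lemma li_le:
  assumes A: "A \<in> carrier_mat n m" and li: "li_mat n m A"
  shows "m \<le> n"
proof (rule ccontr)
  assume "\<not> m \<le> n" hence nm: "n < m" by simp
  define c where "c = (\<lambda>i. vec m (\<lambda>j. if i < n then A $$ (i,j) else (0::complex)))"
  define A' where "A' = mat\<^sub>r m m (\<lambda>i. if i = n then 0\<^sub>v m else c i)"
  have "det A' = 0" unfolding A'_def by (rule det_row_0[OF nm]) (auto simp: c_def)
  then obtain v where v: "v \<in> carrier_vec m" "v \<noteq> 0\<^sub>v m" "A' *\<^sub>v v = 0\<^sub>v m"
    using det_0_iff_vec_prod_zero[of A' m] unfolding A'_def by auto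
  have "A *\<^sub>v v = 0\<^sub>v n"
  proof (rule eq_vecI)
    fix i assume "i < dim_vec (0\<^sub>v n :: complex vec)"
    hence i: "i < n" by simp
    have "(A' *\<^sub>v v) $ i = 0" using v(3) i nm by simp
    moreover have "(A' *\<^sub>v v) $ i = row A' i \<bullet> v" using i nm unfolding A'_def by simp
    moreover have "row A' i = c i" using i nm unfolding A'_def by (simp add: c_def)
    moreover have "c i \<bullet> v = (A *\<^sub>v v) $ i"
      using i A v(1) unfolding c_def by (simp add: scalar_prod_def)
    ultimately show "(A *\<^sub>v v) $ i = 0\<^sub>v n $ i" using i by simp
  qed (use A in simp)
  thus False using li v unfolding li_mat_def by blast
qed

lemma appcol_carrier[simp]: "A \<in> carrier_mat n m \<Longrightarrow> appcol A w \<in> carrier_mat n (Suc m)"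
  unfolding appcol_def by auto

lemma appcol_mult_entry:
  assumes A: "A \<in> carrier_mat n m" and c: "c \<in> carrier_vec (Suc m)" and i: "i < n"
  shows "(appcol A w *\<^sub>v c) $ i = (\<Sum>l<m. A $$ (i,l) * c $ l) + w $ i * c $ m"
proof -
  have "(appcol A w *\<^sub>v c) $ i = (\<Sum>l<Suc m. appcol A w $$ (i,l) * c $ l)"
    using mult_vec_entry[OF appcol_carrier[OF A] c i] .
  also have "\<dots> = (\<Sum>l<m. A $$ (i,l) * c $ l) + w $ i * c $ m"
    using A i by (simp add: appcol_def)
  finally show ?thesis .
qed

lemma appcol_col: assumes A: "A \<in> carrier_mat n m" and w: "w \<in> carrier_vec n"
  shows "j < m \<Longrightarrow> col (appcol A w) j = col A j" "col (appcol A w) m = w"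
  using A w by (auto simp: appcol_def intro!: eq_vecI)

lemma li_appcol:
  assumes A: "A \<in> carrier_mat n m" and li: "li_mat n m A" and w: "w \<in> carrier_vec n"
    and nsp: "\<not> (\<exists>c\<in>carrier_vec m. w = A *\<^sub>v c)"
  shows "li_mat n (Suc m) (appcol A w)"
  unfolding li_mat_def
proof (intro ballI impI)
  fix c :: "complex vec" assume c: "c \<in> carrier_vec (Suc m)" and z: "appcol A w *\<^sub>v c = 0\<^sub>v n"
  have eq: "(\<Sum>l<m. A $$ (i,l) * c $ l) + w $ i * c $ m = 0" if i: "i < n" for i
  proof -
    have "(appcol A w *\<^sub>v c) $ i = 0" using z i by simp
    thus ?thesis using appcol_mult_entry[OF A c i] by simp
  qed
  have cm: "c $ m = 0"
  proof (rule ccontr)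
    assume ne: "c $ m \<noteq> 0"
    define d where "d = vec m (\<lambda>l. - c $ l / c $ m)"
    have "w = A *\<^sub>v d"
    proof (rule eq_vecI)
      fix i assume "i < dim_vec (A *\<^sub>v d)" hence i: "i < n" using A by simp
      have "(A *\<^sub>v d) $ i = (\<Sum>l<m. A $$ (i,l) * d $ l)"
        using mult_vec_entry[OF A _ i, of d] by (simp add: d_def)
      also have "\<dots> = - (\<Sum>l<m. A $$ (i,l) * c $ l) / c $ m"
        unfolding d_def by (simp add: sum_divide_distrib sum_negf)
      also have "\<dots> = w $ i" using eq[OF i] ne by (simp add: field_simps add_eq_0_iff)
      finally show "w $ i = (A *\<^sub>v d) $ i" by simp
    qed (use A w in simp)
    moreover have "d \<in> carrier_vec m" by (simp add: d_def)
    ultimately show False using nsp by blast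
  qed
  define c0 where "c0 = vec m (\<lambda>l. c $ l)"
  have "A *\<^sub>v c0 = 0\<^sub>v n"
  proof (rule eq_vecI)
    fix i assume "i < dim_vec (0\<^sub>v n :: complex vec)" hence i: "i < n" by simp
    have "(A *\<^sub>v c0) $ i = (\<Sum>l<m. A $$ (i,l) * c $ l)"
      using mult_vec_entry[OF A _ i, of c0] by (simp add: c0_def)
    thus "(A *\<^sub>v c0) $ i = 0\<^sub>v n $ i" using eq[OF i] cm i by simp
  qed (use A in simp)
  hence "c0 = 0\<^sub>v m" using li unfolding li_mat_def c0_def by auto
  hence "\<forall>l<m. c $ l = 0"
  proof (intro allI impI)
    fix l assume c0z: "c0 = 0\<^sub>v m" and l: "l < m"
    have "c0 $ l = 0" using c0z l by simp
    thus "c $ l = 0" using l by (simp add: c0_def)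
  qed
  thus "c = 0\<^sub>v (Suc m)" using cm c by (intro eq_vecI) (auto simp: less_Suc_eq)
qed

lemma exists_spanning:
  assumes S: "S \<subseteq> carrier_vec n" and L: "L \<in> carrier_mat n k" and liL: "li_mat n k L"
    and LS: "\<forall>j<k. col L j \<in> S"
  shows "\<exists>m B. B \<in> carrier_mat n m \<and> li_mat n m B \<and> k \<le> m \<and>
     (\<forall>i<n. \<forall>j<k. B $$ (i,j) = L $$ (i,j)) \<and> (\<forall>j<m. col B j \<in> S) \<and>
     (\<forall>w\<in>S. \<exists>c\<in>carrier_vec m. w = B *\<^sub>v c)"
proof -
  define P where "P = (\<lambda>m. \<exists>B. B \<in> carrier_mat n m \<and> li_mat n m B \<and> k \<le> m \<and>
     (\<forall>i<n. \<forall>j<k. B $$ (i,j) = L $$ (i,j)) \<and> (\<forall>j<m. col B j \<in> S))"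
  have Pk: "P k" unfolding P_def using L liL LS by blast
  have bnd: "\<forall>y. P y \<longrightarrow> id y < Suc n"
  proof (intro allI impI)
    fix y assume "P y"
    then obtain B where "B \<in> carrier_mat n y" "li_mat n y B" unfolding P_def by blast
    thus "id y < Suc n" using li_le by force
  qed
  obtain m where Pm: "P m" and mx: "\<forall>y. P y \<longrightarrow> y \<le> m"
    using ex_has_greatest_nat[OF Pk bnd] by auto
  then obtain B where B: "B \<in> carrier_mat n m" "li_mat n m B" "k \<le> m"
    "\<forall>i<n. \<forall>j<k. B $$ (i,j) = L $$ (i,j)" "\<forall>j<m. col B j \<in> S" unfolding P_def by blast
  have "\<forall>w\<in>S. \<exists>c\<in>carrier_vec m. w = B *\<^sub>v c"
  proof (rule ccontr)
    assume "\<not> ?thesis"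
    then obtain w where w: "w \<in> S" and nsp: "\<not> (\<exists>c\<in>carrier_vec m. w = B *\<^sub>v c)" by blast
    have wc: "w \<in> carrier_vec n" using w S by auto
    have "P (Suc m)" unfolding P_def
    proof (intro exI conjI)
      show "appcol B w \<in> carrier_mat n (Suc m)" using B by simp
      show "li_mat n (Suc m) (appcol B w)" by (rule li_appcol[OF B(1) B(2) wc nsp])
      show "k \<le> Suc m" using B by simp
      show "\<forall>i<n. \<forall>j<k. appcol B w $$ (i, j) = L $$ (i, j)"
        using B by (auto simp: appcol_def)
      show "\<forall>j<Suc m. col (appcol B w) j \<in> S"
        using B w appcol_col[OF B(1) wc] by (auto simp: less_Suc_eq)
    qed
    thus False using mx by force
  qed
  thus ?thesis using B by blast
qed

lemma spanning_inverse:
  fixes B :: "complex mat"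
  assumes B: "B \<in> carrier_mat n m" and sp: "\<forall>w\<in>carrier_vec n. \<exists>c\<in>carrier_vec m. w = B *\<^sub>v c"
  shows "\<exists>C\<in>carrier_mat m n. B * C = 1\<^sub>m n"
proof -
  have "\<forall>j. \<exists>c. j < n \<longrightarrow> c \<in> carrier_vec m \<and> unit_vec n j = B *\<^sub>v c"
  proof
    fix j show "\<exists>c. j < n \<longrightarrow> c \<in> carrier_vec m \<and> unit_vec n j = B *\<^sub>v c"
      using sp unit_vec_carrier[of n j] by blast
  qed
  from choice[OF this] obtain cs where cs0: "\<forall>j. j < n \<longrightarrow> cs j \<in> carrier_vec m \<and> unit_vec n j = B *\<^sub>v cs j"
    by blast
  hence cs: "\<And>j. j < n \<Longrightarrow> cs j \<in> carrier_vec m \<and> unit_vec n j = B *\<^sub>v cs j" by blast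
  define C where "C = mat m n (\<lambda>(i,j). cs j $ i)"
  have "B * C = 1\<^sub>m n"
  proof (rule eq_matI)
    fix i j assume i: "i < dim_row (1\<^sub>m n :: complex mat)" and j: "j < dim_col (1\<^sub>m n :: complex mat)"
    hence i: "i < n" and j: "j < n" by auto
    have Cc: "C \<in> carrier_mat m n" by (simp add: C_def)
    have "(B * C) $$ (i,j) = (\<Sum>l<m. B $$ (i,l) * C $$ (l,j))"
      using mult_entry[OF B Cc i j] .
    also have "\<dots> = (\<Sum>l<m. B $$ (i,l) * cs j $ l)"
      by (rule sum.cong) (auto simp: C_def j)
    also have "\<dots> = (B *\<^sub>v cs j) $ i" using mult_vec_entry[OF B _ i, of "cs j"] cs[OF j] by simp
    also have "\<dots> = unit_vec n j $ i" using cs[OF j] by simp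
    finally show "(B * C) $$ (i,j) = 1\<^sub>m n $$ (i,j)" using i j by simp
  qed (use B in \<open>auto simp: C_def\<close>)
  thus ?thesis by (intro bexI[of _ C]) (auto simp: C_def)
qed

lemma spanning_ge:
  fixes B :: "complex mat"
  assumes B: "B \<in> carrier_mat n m" and sp: "\<forall>w\<in>carrier_vec n. \<exists>c\<in>carrier_vec m. w = B *\<^sub>v c"
  shows "n \<le> m"
proof -
  obtain C where C: "C \<in> carrier_mat m n" and BC: "B * C = 1\<^sub>m n" using spanning_inverse[OF B sp] by blast
  have "li_mat m n C" unfolding li_mat_def
  proof (intro ballI impI)
    fix v :: "complex vec" assume v: "v \<in> carrier_vec n" and z: "C *\<^sub>v v = 0\<^sub>v m"
    have "v = (B * C) *\<^sub>v v" using BC v by simp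
    also have "\<dots> = B *\<^sub>v (C *\<^sub>v v)" using B C v by simp
    also have "\<dots> = 0\<^sub>v n" using z B by (auto intro!: eq_vecI simp: scalar_prod_def)
    finally show "v = 0\<^sub>v n" .
  qed
  thus ?thesis using li_le[OF C] by simp
qed

lemma mult_vec_zero_cols: "A \<in> carrier_mat n 0 \<Longrightarrow> c \<in> carrier_vec 0 \<Longrightarrow> A *\<^sub>v c = 0\<^sub>v n"
  by (auto intro!: eq_vecI simp: scalar_prod_def)

lemma subspace_closed:
  assumes W: "is_subspace n W"
  shows "A \<in> carrier_mat n m \<Longrightarrow> \<forall>j<m. col A j \<in> W \<Longrightarrow> c \<in> carrier_vec m \<Longrightarrow> A *\<^sub>v c \<in> W"
proof (induction m arbitrary: A c)
  case 0
  thus ?case using W mult_vec_zero_cols[OF 0(1) 0(3)] unfolding is_subspace_def by simp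
next
  case (Suc m)
  define A' where "A' = mat n m (\<lambda>(i,j). A $$ (i,j))"
  define c' where "c' = vec m (\<lambda>i. c $ i)"
  have A': "A' \<in> carrier_mat n m" and c': "c' \<in> carrier_vec m" by (auto simp: A'_def c'_def)
  have colA': "\<forall>j<m. col A' j \<in> W"
  proof (intro allI impI)
    fix j assume j: "j < m"
    have "col A' j = col A j" using Suc.prems(1) j by (auto simp: A'_def intro!: eq_vecI)
    thus "col A' j \<in> W" using Suc.prems(2) j by simp
  qed
  have IH: "A' *\<^sub>v c' \<in> W" by (rule Suc.IH[OF A' colA' c'])
  have cm: "col A m \<in> W" using Suc.prems(2) by simp
  have eq: "A *\<^sub>v c = A' *\<^sub>v c' + (c $ m) \<cdot>\<^sub>v col A m"
  proof (rule eq_vecI)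
    fix i assume "i < dim_vec (A' *\<^sub>v c' + (c $ m) \<cdot>\<^sub>v col A m)"
    hence i: "i < n" using A' Suc.prems(1) by simp
    have "(A *\<^sub>v c) $ i = (\<Sum>l<Suc m. A $$ (i,l) * c $ l)" by (rule mult_vec_entry[OF Suc.prems(1) Suc.prems(3) i])
    also have "\<dots> = (\<Sum>l<m. A' $$ (i,l) * c' $ l) + c $ m * A $$ (i,m)"
      using i by (simp add: A'_def c'_def)
    also have "(\<Sum>l<m. A' $$ (i,l) * c' $ l) = (A' *\<^sub>v c') $ i" by (rule mult_vec_entry[OF A' c' i, symmetric])
    finally show "(A *\<^sub>v c) $ i = (A' *\<^sub>v c' + (c $ m) \<cdot>\<^sub>v col A m) $ i"
      using i A' Suc.prems(1) by simp
  qed (use A' Suc.prems(1) in simp)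
  show ?case unfolding eq using W IH cm unfolding is_subspace_def by blast
qed

lemma block_basis:
  assumes W: "is_subspace n W" and W0: "W \<noteq> {0\<^sub>v n}" and Wn: "W \<noteq> carrier_vec n"
  shows "\<exists>k P Q. 0 < k \<and> k < n \<and> P \<in> carrier_mat n n \<and> Q \<in> carrier_mat n n \<and>
    Q * P = 1\<^sub>m n \<and> P * Q = 1\<^sub>m n \<and> (\<forall>j<k. col P j \<in> W) \<and>
    (\<forall>w\<in>W. \<exists>c\<in>carrier_vec n. w = P *\<^sub>v c \<and> (\<forall>i. k \<le> i \<longrightarrow> i < n \<longrightarrow> c $ i = 0))"
proof -
  have Wc: "W \<subseteq> carrier_vec n" and W0in: "0\<^sub>v n \<in> W" using W unfolding is_subspace_def by auto
  define L0 :: "complex mat" where "L0 = mat n 0 (\<lambda>_. 0)"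
  have L0: "L0 \<in> carrier_mat n 0" by (simp add: L0_def)
  have liL0: "li_mat n 0 L0" unfolding li_mat_def by (auto intro!: eq_vecI)
  obtain k B1 where B1: "B1 \<in> carrier_mat n k" "li_mat n k B1" "\<forall>j<k. col B1 j \<in> W"
      "\<forall>w\<in>W. \<exists>c\<in>carrier_vec k. w = B1 *\<^sub>v c"
    using exists_spanning[OF Wc L0 liL0] by auto
  have B1c: "\<forall>j<k. col B1 j \<in> carrier_vec n" using B1(1) by auto
  obtain m B where B: "B \<in> carrier_mat n m" "li_mat n m B" "k \<le> m"
      "\<forall>i<n. \<forall>j<k. B $$ (i,j) = B1 $$ (i,j)"
      "\<forall>w\<in>carrier_vec n. \<exists>c\<in>carrier_vec m. w = B *\<^sub>v c"
    using exists_spanning[OF subset_refl B1(1) B1(2) B1c] by auto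
  have mn: "m = n" using li_le[OF B(1) B(2)] spanning_ge[OF B(1) B(5)] by simp
  have k0: "0 < k"
  proof (rule ccontr)
    assume "\<not> 0 < k" hence k: "k = 0" by simp
    have "W \<subseteq> {0\<^sub>v n}"
    proof
      fix w assume "w \<in> W"
      then obtain c where c: "c \<in> carrier_vec k" "w = B1 *\<^sub>v c" using B1(4) by auto
      thus "w \<in> {0\<^sub>v n}" using mult_vec_zero_cols[of B1 n c] B1(1) k by simp
    qed
    thus False using W0 W0in by auto
  qed
  have BB1: "\<forall>j<k. col B j = col B1 j"
    using B(1,4) B1(1) B(3) by (auto intro!: eq_vecI)
  have kn: "k < n"
  proof (rule ccontr)
    assume "\<not> k < n" hence k: "k = n" using B(3) mn by simp
    have "carrier_vec n \<subseteq> W"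
    proof
      fix v :: "complex vec" assume "v \<in> carrier_vec n"
      then obtain c where c: "c \<in> carrier_vec m" "v = B *\<^sub>v c" using B(5) by auto
      have "B *\<^sub>v c \<in> W"
        by (rule subspace_closed[OF W B(1) _ c(1)]) (use BB1 B1(3) k mn in auto)
      thus "v \<in> W" using c by simp
    qed
    thus False using Wn Wc by auto
  qed
  have Bn: "B \<in> carrier_mat n n" using B(1) mn by simp
  obtain C where C: "C \<in> carrier_mat n n" and BC: "B * C = 1\<^sub>m n"
    using spanning_inverse[OF B(1) B(5)] mn by auto
  have CB: "C * B = 1\<^sub>m n" by (rule mat_mult_left_right_inverse[OF Bn C BC])
  have span: "\<forall>w\<in>W. \<exists>c\<in>carrier_vec n. w = B *\<^sub>v c \<and> (\<forall>i. k \<le> i \<longrightarrow> i < n \<longrightarrow> c $ i = 0)"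
  proof
    fix w assume "w \<in> W"
    then obtain c where c: "c \<in> carrier_vec k" "w = B1 *\<^sub>v c" using B1(4) by auto
    define c' where "c' = vec n (\<lambda>i. if i < k then c $ i else 0)"
    have "B *\<^sub>v c' = B1 *\<^sub>v c"
    proof (rule eq_vecI)
      fix i assume "i < dim_vec (B1 *\<^sub>v c)" hence i: "i < n" using B1(1) by simp
      have "(B *\<^sub>v c') $ i = (\<Sum>l<n. B $$ (i,l) * c' $ l)"
        by (rule mult_vec_entry[OF Bn _ i]) (simp add: c'_def)
      also have "\<dots> = (\<Sum>l<k. B $$ (i,l) * c' $ l)"
        by (rule sum.mono_neutral_right) (use kn in \<open>auto simp: c'_def\<close>)
      also have "\<dots> = (\<Sum>l<k. B1 $$ (i,l) * c $ l)"
        by (rule sum.cong) (use B(4) i kn in \<open>auto simp: c'_def\<close>)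
      also have "\<dots> = (B1 *\<^sub>v c) $ i" by (rule mult_vec_entry[OF B1(1) c(1) i, symmetric])
      finally show "(B *\<^sub>v c') $ i = (B1 *\<^sub>v c) $ i" .
    qed (use Bn B1(1) in simp)
    thus "\<exists>c\<in>carrier_vec n. w = B *\<^sub>v c \<and> (\<forall>i. k \<le> i \<longrightarrow> i < n \<longrightarrow> c $ i = 0)"
      using c by (intro bexI[of _ c']) (auto simp: c'_def)
  qed
  show ?thesis
    by (rule exI[of _ k], rule exI[of _ B], rule exI[of _ C])
       (use k0 kn Bn C CB BC BB1 B1(3) span in auto)
qed


lemma mult_unit_entry:
  fixes T :: "complex mat"
  assumes T: "T \<in> carrier_mat n m" and j: "j < m" and i: "i < n"
  shows "(T *\<^sub>v unit_vec m j) $ i = T $$ (i,j)"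
proof -
  have "(T *\<^sub>v unit_vec m j) $ i = (\<Sum>l<m. T $$ (i,l) * unit_vec m j $ l)"
    by (rule mult_vec_entry[OF T _ i]) simp
  also have "\<dots> = (\<Sum>l<m. if l = j then T $$ (i,l) else 0)"
    by (rule sum.cong) (auto simp: unit_vec_def)
  also have "\<dots> = T $$ (i,j)" using j by simp
  finally show ?thesis .
qed

definition msum :: "nat \<Rightarrow> nat \<Rightarrow> 'c set \<Rightarrow> ('c \<Rightarrow> complex mat) \<Rightarrow> complex mat" where
  "msum n m S M = mat n m (\<lambda>(i,j). \<Sum>g\<in>S. M g $$ (i,j))"

lemma msum_carrier[simp]: "msum n m S M \<in> carrier_mat n m"
  unfolding msum_def by simp

lemma msum_dims[simp]: "dim_row (msum n m S M) = n" "dim_col (msum n m S M) = m"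
  unfolding msum_def by simp_all

lemma msum_index[simp]: "i < n \<Longrightarrow> j < m \<Longrightarrow> msum n m S M $$ (i,j) = (\<Sum>g\<in>S. M g $$ (i,j))"
  unfolding msum_def by simp

lemma mult_msum_left:
  assumes A: "A \<in> carrier_mat p n" and M: "\<And>g. g \<in> S \<Longrightarrow> M g \<in> carrier_mat n m"
  shows "A * msum n m S M = msum p m S (\<lambda>g. A * M g)"
proof (rule eq_matI)
  fix i j assume "i < dim_row (msum p m S (\<lambda>g. A * M g))" "j < dim_col (msum p m S (\<lambda>g. A * M g))"
  hence i: "i < p" and j: "j < m" by auto
  have "(A * msum n m S M) $$ (i,j) = (\<Sum>l<n. A $$ (i,l) * (\<Sum>g\<in>S. M g $$ (l,j)))"
    using mult_entry[OF A msum_carrier i j] j by simp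
  also have "\<dots> = (\<Sum>g\<in>S. \<Sum>l<n. A $$ (i,l) * M g $$ (l,j))"
    by (simp add: sum_distrib_left sum.swap[of _ S])
  also have "\<dots> = (\<Sum>g\<in>S. (A * M g) $$ (i,j))"
    by (rule sum.cong[OF refl]) (simp add: mult_entry[OF A M i j])
  finally show "(A * msum n m S M) $$ (i,j) = msum p m S (\<lambda>g. A * M g) $$ (i,j)" using i j by simp
qed (use A in auto)

lemma mult_msum_right:
  assumes A: "A \<in> carrier_mat m p" and M: "\<And>g. g \<in> S \<Longrightarrow> M g \<in> carrier_mat n m"
  shows "msum n m S M * A = msum n p S (\<lambda>g. M g * A)"
proof (rule eq_matI)
  fix i j assume "i < dim_row (msum n p S (\<lambda>g. M g * A))" "j < dim_col (msum n p S (\<lambda>g. M g * A))"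
  hence i: "i < n" and j: "j < p" by auto
  have "(msum n m S M * A) $$ (i,j) = (\<Sum>l<m. (\<Sum>g\<in>S. M g $$ (i,l)) * A $$ (l,j))"
    using mult_entry[OF msum_carrier A i j] i by simp
  also have "\<dots> = (\<Sum>g\<in>S. \<Sum>l<m. M g $$ (i,l) * A $$ (l,j))"
    by (simp add: sum_distrib_right sum.swap[of _ S])
  also have "\<dots> = (\<Sum>g\<in>S. (M g * A) $$ (i,j))"
    by (rule sum.cong[OF refl]) (simp add: mult_entry[OF M A i j])
  finally show "(msum n m S M * A) $$ (i,j) = msum n p S (\<lambda>g. M g * A) $$ (i,j)" using i j by simp
qed (use A in auto)

lemma msum_cong: "(\<And>g. g \<in> S \<Longrightarrow> M g = M' g) \<Longrightarrow> msum n m S M = msum n m S M'"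
  unfolding msum_def by (auto intro!: eq_matI sum.cong)

lemma msum_reindex:
  assumes "bij_betw h S S'"
  shows "msum n m S' M = msum n m S (\<lambda>g. M (h g))"
proof (rule eq_matI)
  fix i j assume "i < dim_row (msum n m S (\<lambda>g. M (h g)))" "j < dim_col (msum n m S (\<lambda>g. M (h g)))"
  hence i: "i < n" and j: "j < m" by auto
  show "msum n m S' M $$ (i,j) = msum n m S (\<lambda>g. M (h g)) $$ (i,j)"
    using i j sum.reindex_bij_betw[OF assms, of "\<lambda>g. M g $$ (i,j)"] by simp
qed auto

lemma trace_msum: "(\<And>g. g \<in> S \<Longrightarrow> M g \<in> carrier_mat n n) \<Longrightarrow>
   mat_trace (msum n n S M) = (\<Sum>g\<in>S. mat_trace (M g))"
proof -
  assume M: "\<And>g. g \<in> S \<Longrightarrow> M g \<in> carrier_mat n n"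
  have "mat_trace (msum n n S M) = (\<Sum>i<n. \<Sum>g\<in>S. M g $$ (i,i))"
    unfolding mat_trace_def by simp
  also have "\<dots> = (\<Sum>g\<in>S. \<Sum>i<n. M g $$ (i,i))" by (rule sum.swap)
  also have "\<dots> = (\<Sum>g\<in>S. mat_trace (M g))"
    unfolding mat_trace_def using M by (intro sum.cong) auto
  finally show ?thesis .
qed

lemma msum_smult_one:
  "msum n n S (\<lambda>g. a g \<cdot>\<^sub>m 1\<^sub>m n) = (\<Sum>g\<in>S. a g) \<cdot>\<^sub>m 1\<^sub>m n"
  unfolding msum_def by (auto intro!: eq_matI simp: sum.If_cases)

locale fgroup = group G for G :: "('a, 'b) monoid_scheme" (structure) +
  assumes fin: "finite (carrier G)"
begin

abbreviation "NG \<equiv> card (carrier G)"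

lemma NG_pos: "NG > 0" using fin one_closed card_gt_0_iff by blast

lemma rep_carrier: "is_rep G n \<rho> \<Longrightarrow> g \<in> carrier G \<Longrightarrow> \<rho> g \<in> carrier_mat n n"
  unfolding is_rep_def by auto

lemma rep_mult: "is_rep G n \<rho> \<Longrightarrow> g \<in> carrier G \<Longrightarrow> h \<in> carrier G \<Longrightarrow> \<rho> (g \<otimes> h) = \<rho> g * \<rho> h"
  unfolding is_rep_def by auto

lemma rep_one: "is_rep G n \<rho> \<Longrightarrow> \<rho> \<one> = 1\<^sub>m n"
  unfolding is_rep_def by auto

lemma rep_n: "is_rep G n \<rho> \<Longrightarrow> n \<ge> 1"
  unfolding is_rep_def by auto

lemma rep_inv:
  assumes r: "is_rep G n \<rho>" and g: "g \<in> carrier G"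
  shows "\<rho> (inv g) * \<rho> g = 1\<^sub>m n" "\<rho> g * \<rho> (inv g) = 1\<^sub>m n"
  using rep_mult[OF r, of "inv g" g] rep_mult[OF r, of g "inv g"] rep_one[OF r] g by auto

lemma rep_pow:
  assumes r: "is_rep G n \<rho>" and g: "g \<in> carrier G"
  shows "\<rho> (g [^] (k::nat)) = \<rho> g ^\<^sub>m k"
proof (induction k)
  case 0 thus ?case using rep_one[OF r] rep_carrier[OF r g] by simp
next
  case (Suc k)
  have "\<rho> (g [^] Suc k) = \<rho> (g [^] k \<otimes> g)" by simp
  also have "\<dots> = \<rho> (g [^] k) * \<rho> g" using rep_mult[OF r] g by simp
  finally show ?case using Suc by simp
qed

lemma inv_pow: assumes g: "g \<in> carrier G" shows "inv g = g [^] (NG - 1)"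
proof -
  have "g [^] (NG - 1) \<otimes> g = g [^] NG"
    using NG_pos g by (metis Suc_diff_1 nat_pow_Suc)
  also have "\<dots> = \<one>" using pow_order_eq_1[OF g] unfolding Coset.order_def .
  finally show ?thesis using g by (metis inv_equality nat_pow_closed)
qed

lemma character_in: "g \<in> carrier G \<Longrightarrow> character G \<rho> g = mat_trace (\<rho> g)"
  unfolding character_def by simp

lemma character_out: "g \<notin> carrier G \<Longrightarrow> character G \<rho> g = 0"
  unfolding character_def by simp

lemma character_facts:
  assumes r: "is_rep G n \<rho>" and g: "g \<in> carrier G"
  shows "character G \<rho> (inv g) = cnj (character G \<rho> g)" "cmod (character G \<rho> g) \<le> n"
proof -
  have A: "\<rho> g \<in> carrier_mat n n" by (rule rep_carrier[OF r g])
  have AN: "\<rho> g ^\<^sub>m NG = 1\<^sub>m n"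
    using rep_pow[OF r g, of NG, symmetric] pow_order_eq_1[OF g] rep_one[OF r] unfolding Coset.order_def by simp
  note T = trace_pow_root_unity[OF A AN NG_pos]
  have "character G \<rho> (inv g) = mat_trace (\<rho> (g [^] (NG - 1)))"
    using g inv_pow[OF g] by (simp add: character_def)
  also have "\<dots> = cnj (mat_trace (\<rho> g))" using rep_pow[OF r g] T(1) by simp
  finally show "character G \<rho> (inv g) = cnj (character G \<rho> g)" using g by (simp add: character_def)
  show "cmod (character G \<rho> g) \<le> n" using T(2) g by (simp add: character_def)
qed

lemma character_one: assumes r: "is_rep G n \<rho>" shows "character G \<rho> \<one> = of_nat n"
proof -
  have "\<rho> \<one> = 1\<^sub>m n" by (rule rep_one[OF r])
  thus ?thesis by (simp add: character_def)
qed

lemma character_conj: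
  assumes r: "is_rep G n \<rho>" and g: "g \<in> carrier G" and x: "x \<in> carrier G"
  shows "character G \<rho> (x \<otimes> g \<otimes> inv x) = character G \<rho> g"
proof -
  have "character G \<rho> (x \<otimes> g \<otimes> inv x) = mat_trace (\<rho> x * \<rho> g * \<rho> (inv x))"
    using g x rep_mult[OF r] by (simp add: character_def)
  also have "\<dots> = mat_trace (\<rho> g)"
    by (rule trace_similar) (use rep_carrier[OF r] rep_inv[OF r x] g x in auto)
  finally show ?thesis using g by (simp add: character_def)
qed

lemma schur:
  assumes r: "is_irr_rep G n \<rho>" and T: "T \<in> carrier_mat n n"
    and comm: "\<forall>g\<in>carrier G. \<rho> g * T = T * \<rho> g"
  shows "\<exists>a. T = a \<cdot>\<^sub>m 1\<^sub>m n"
proof -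
  have rr: "is_rep G n \<rho>" using r unfolding is_irr_rep_def by auto
  have n1: "n \<ge> 1" using rep_n[OF rr] .
  obtain es where cp: "char_poly T = (\<Prod>a\<leftarrow>es. [:- a, 1:])" and len: "length es = n"
    using char_poly_factorized[OF T] by blast
  obtain e es' where es: "es = e # es'" using len n1 by (cases es) auto
  have "poly (char_poly T) e = 0" unfolding cp es by simp
  hence "eigenvalue T e" using eigenvalue_root_char_poly[OF T] by simp
  then obtain v where v: "v \<in> carrier_vec n" "v \<noteq> 0\<^sub>v n" "T *\<^sub>v v = e \<cdot>\<^sub>v v"
    unfolding eigenvalue_def eigenvector_def using T by auto
  define W where "W = {w \<in> carrier_vec n. T *\<^sub>v w = e \<cdot>\<^sub>v w}"
  have sub: "is_subspace n W" unfolding is_subspace_def W_def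
  proof (intro conjI ballI allI)
    show "{w \<in> carrier_vec n. T *\<^sub>v w = e \<cdot>\<^sub>v w} \<subseteq> carrier_vec n" by auto
    show "0\<^sub>v n \<in> {w \<in> carrier_vec n. T *\<^sub>v w = e \<cdot>\<^sub>v w}" using T by auto
  next
    fix x y assume x: "x \<in> {w \<in> carrier_vec n. T *\<^sub>v w = e \<cdot>\<^sub>v w}" and y: "y \<in> {w \<in> carrier_vec n. T *\<^sub>v w = e \<cdot>\<^sub>v w}"
    show "x + y \<in> {w \<in> carrier_vec n. T *\<^sub>v w = e \<cdot>\<^sub>v w}"
      using x y T by (auto simp: mult_add_distrib_mat_vec[OF T] smult_add_distrib_vec)
  next
    fix c x assume x: "x \<in> {w \<in> carrier_vec n. T *\<^sub>v w = e \<cdot>\<^sub>v w}"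
    show "c \<cdot>\<^sub>v x \<in> {w \<in> carrier_vec n. T *\<^sub>v w = e \<cdot>\<^sub>v w}"
      using x T by (auto simp: mult_mat_vec smult_smult_assoc mult.commute)
  qed
  have inv: "\<forall>g\<in>carrier G. \<forall>w\<in>W. \<rho> g *\<^sub>v w \<in> W"
  proof (intro ballI)
    fix g w assume g: "g \<in> carrier G" and w: "w \<in> W"
    have A: "\<rho> g \<in> carrier_mat n n" by (rule rep_carrier[OF rr g])
    have wc: "w \<in> carrier_vec n" using w unfolding W_def by auto
    have "T *\<^sub>v (\<rho> g *\<^sub>v w) = (T * \<rho> g) *\<^sub>v w" using A T wc by simp
    also have "\<dots> = (\<rho> g * T) *\<^sub>v w" using comm g by simp
    also have "\<dots> = \<rho> g *\<^sub>v (T *\<^sub>v w)" using A T wc by simp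
    also have "\<dots> = \<rho> g *\<^sub>v (e \<cdot>\<^sub>v w)" using w unfolding W_def by simp
    also have "\<dots> = e \<cdot>\<^sub>v (\<rho> g *\<^sub>v w)" using A wc by (simp add: mult_mat_vec)
    finally show "\<rho> g *\<^sub>v w \<in> W" using A wc unfolding W_def by simp
  qed
  have "W \<noteq> {0\<^sub>v n}" using v unfolding W_def by auto
  hence Wall: "W = carrier_vec n" using r sub inv unfolding is_irr_rep_def by blast
  have "T = e \<cdot>\<^sub>m 1\<^sub>m n"
  proof (rule eq_matI)
    fix i j assume "i < dim_row (e \<cdot>\<^sub>m 1\<^sub>m n)" "j < dim_col (e \<cdot>\<^sub>m 1\<^sub>m n)"
    hence i: "i < n" and j: "j < n" by auto
    have "unit_vec n j \<in> W" using Wall by simp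
    hence "T *\<^sub>v unit_vec n j = e \<cdot>\<^sub>v unit_vec n j" unfolding W_def by simp
    hence "(T *\<^sub>v unit_vec n j) $ i = e * (if i = j then 1 else 0)" using i j by simp
    thus "T $$ (i,j) = (e \<cdot>\<^sub>m 1\<^sub>m n) $$ (i,j)" using mult_unit_entry[OF T j i] i j by simp
  qed (use T in auto)
  thus ?thesis by blast
qed

end


definition single_mat :: "nat \<Rightarrow> nat \<Rightarrow> nat \<Rightarrow> nat \<Rightarrow> complex mat" where
  "single_mat n m a b = mat n m (\<lambda>(i,j). if i = a \<and> j = b then 1 else 0)"

lemma single_mat_carrier[simp]: "single_mat n m a b \<in> carrier_mat n m"
  unfolding single_mat_def by simp

lemma mult_single_entry:
  assumes A: "A \<in> carrier_mat p n" and B: "B \<in> carrier_mat m q" and a: "a < n" and b: "b < m"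
    and i: "i < p" and k: "k < q"
  shows "(A * single_mat n m a b * B) $$ (i,k) = A $$ (i,a) * B $$ (b,k)"
proof -
  have AE: "A * single_mat n m a b \<in> carrier_mat p m" using A by simp
  have e1: "(A * single_mat n m a b) $$ (i,j) = (if j = b then A $$ (i,a) else 0)" if j: "j < m" for j
  proof -
    have "(A * single_mat n m a b) $$ (i,j) = (\<Sum>l<n. A $$ (i,l) * single_mat n m a b $$ (l,j))"
      by (rule mult_entry[OF A single_mat_carrier i j])
    also have "\<dots> = (\<Sum>l<n. if l = a then (if j = b then A $$ (i,a) else 0) else 0)"
      by (rule sum.cong) (use j in \<open>auto simp: single_mat_def\<close>)
    also have "\<dots> = (if j = b then A $$ (i,a) else 0)" using a by simp
    finally show ?thesis .
  qed
  have "(A * single_mat n m a b * B) $$ (i,k) = (\<Sum>j<m. (A * single_mat n m a b) $$ (i,j) * B $$ (j,k))"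
    by (rule mult_entry[OF AE B i k])
  also have "\<dots> = (\<Sum>j<m. if j = b then A $$ (i,a) * B $$ (b,k) else 0)"
    by (rule sum.cong) (auto simp: e1)
  also have "\<dots> = A $$ (i,a) * B $$ (b,k)" using b by simp
  finally show ?thesis .
qed

lemma trace_single: "a < n \<Longrightarrow> b < n \<Longrightarrow> mat_trace (single_mat n n a b) = (if a = b then 1 else 0)"
  unfolding mat_trace_def single_mat_def by (auto simp: sum.If_cases)

lemma assoc_l4:
  assumes A: "A \<in> carrier_mat n1 n2" and B: "B \<in> carrier_mat n2 n3" and C: "C \<in> carrier_mat n3 n4"
    and D: "D \<in> carrier_mat n4 n5"
  shows "A * (B * C * D) = A * B * C * D"
proof -
  have "A * (B * C * D) = (A * (B * C)) * D"
    by (rule assoc_mult_mat[symmetric]) (use A B C D in auto)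
  also have "A * (B * C) = A * B * C" by (rule assoc_mult_mat[symmetric]) (use A B C in auto)
  finally show ?thesis .
qed

lemma assoc_m4:
  assumes A: "A \<in> carrier_mat n1 n2" and B: "B \<in> carrier_mat n2 n3" and C: "C \<in> carrier_mat n3 n4"
    and D: "D \<in> carrier_mat n4 n5"
  shows "A * B * C * D = A * (B * C) * D"
  using assoc_mult_mat[OF A B C] by simp

context fgroup
begin

definition avg :: "('a \<Rightarrow> complex mat) \<Rightarrow> ('a \<Rightarrow> complex mat) \<Rightarrow> nat \<Rightarrow> nat \<Rightarrow> complex mat \<Rightarrow> complex mat" where
  "avg \<rho> \<sigma> n m X = msum n m (carrier G) (\<lambda>g. \<rho> g * X * \<sigma> (inv g))"

lemma avg_carrier[simp]: "avg \<rho> \<sigma> n m X \<in> carrier_mat n m"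
  unfolding avg_def by simp

lemma bij_lmult: "x \<in> carrier G \<Longrightarrow> bij_betw (\<lambda>g. x \<otimes> g) (carrier G) (carrier G)"
  by (rule bij_betwI[where g = "\<lambda>g. inv x \<otimes> g"]) (auto simp: m_assoc[symmetric])

lemma conj_carrier:
  assumes r: "is_rep G n \<rho>" and s: "is_rep G m \<sigma>" and X: "X \<in> carrier_mat n m" and g: "g \<in> carrier G"
  shows "\<rho> g * X * \<sigma> (inv g) \<in> carrier_mat n m"
  using rep_carrier[OF r g] rep_carrier[OF s inv_closed[OF g]] X by (meson mult_carrier_mat)

lemma avg_intertwine:
  assumes r: "is_rep G n \<rho>" and s: "is_rep G m \<sigma>" and X: "X \<in> carrier_mat n m" and x: "x \<in> carrier G"
  shows "\<rho> x * avg \<rho> \<sigma> n m X = avg \<rho> \<sigma> n m X * \<sigma> x"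
proof -
  note rc = rep_carrier[OF r] and sc = rep_carrier[OF s]
  have "\<rho> x * avg \<rho> \<sigma> n m X = msum n m (carrier G) (\<lambda>g. \<rho> x * (\<rho> g * X * \<sigma> (inv g)))"
    unfolding avg_def by (rule mult_msum_left[OF rc[OF x]]) (use conj_carrier[OF r s X] in auto)
  also have "\<dots> = msum n m (carrier G) (\<lambda>g. \<rho> (x \<otimes> g) * X * \<sigma> (inv g))"
  proof (rule msum_cong)
    fix g assume g: "g \<in> carrier G"
    have "\<rho> x * (\<rho> g * X * \<sigma> (inv g)) = (\<rho> x * \<rho> g) * X * \<sigma> (inv g)"
      by (rule assoc_l4) (use rc[OF x] rc[OF g] X sc[of "inv g"] g in auto)
    thus "\<rho> x * (\<rho> g * X * \<sigma> (inv g)) = \<rho> (x \<otimes> g) * X * \<sigma> (inv g)"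
      using rep_mult[OF r x g] by simp
  qed
  also have "\<dots> = msum n m (carrier G) (\<lambda>g. \<rho> (x \<otimes> (inv x \<otimes> g)) * X * \<sigma> (inv (inv x \<otimes> g)))"
    by (rule msum_reindex[OF bij_lmult]) (use x in simp)
  also have "\<dots> = msum n m (carrier G) (\<lambda>g. (\<rho> g * X * \<sigma> (inv g)) * \<sigma> x)"
  proof (rule msum_cong)
    fix g assume g: "g \<in> carrier G"
    have e1: "x \<otimes> (inv x \<otimes> g) = g" using x g by (simp add: m_assoc[symmetric])
    have e2: "inv (inv x \<otimes> g) = inv g \<otimes> x" using x g by (simp add: inv_mult_group)
    have e3: "\<sigma> (inv g \<otimes> x) = \<sigma> (inv g) * \<sigma> x" using rep_mult[OF s] x g by simp
    have e4: "\<rho> g * X * (\<sigma> (inv g) * \<sigma> x) = (\<rho> g * X * \<sigma> (inv g)) * \<sigma> x"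
      by (rule assoc_mult_mat[symmetric]) (use rc[OF g] X sc[OF x] sc[of "inv g"] g in auto)
    show "\<rho> (x \<otimes> (inv x \<otimes> g)) * X * \<sigma> (inv (inv x \<otimes> g)) = (\<rho> g * X * \<sigma> (inv g)) * \<sigma> x"
      unfolding e1 e2 e3 e4 ..
  qed
  also have "\<dots> = avg \<rho> \<sigma> n m X * \<sigma> x"
    unfolding avg_def by (rule mult_msum_right[symmetric, OF sc[OF x]]) (use conj_carrier[OF r s X] in auto)
  finally show ?thesis .
qed

lemma avg_self:
  assumes r: "is_irr_rep G n \<rho>" and Y: "Y \<in> carrier_mat n n"
  shows "avg \<rho> \<rho> n n Y = (of_nat NG * mat_trace Y / of_nat n) \<cdot>\<^sub>m 1\<^sub>m n"
proof -
  have rr: "is_rep G n \<rho>" using r unfolding is_irr_rep_def by auto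
  note rc = rep_carrier[OF rr]
  obtain a where a: "avg \<rho> \<rho> n n Y = a \<cdot>\<^sub>m 1\<^sub>m n"
    using schur[OF r avg_carrier] avg_intertwine[OF rr rr Y] by blast
  have "mat_trace (avg \<rho> \<rho> n n Y) = (\<Sum>g\<in>carrier G. mat_trace (\<rho> g * Y * \<rho> (inv g)))"
    unfolding avg_def by (rule trace_msum) (use conj_carrier[OF rr rr Y] in auto)
  also have "\<dots> = (\<Sum>g\<in>carrier G. mat_trace Y)"
    by (rule sum.cong[OF refl], rule trace_similar) (use rc Y rep_inv[OF rr] in auto)
  also have "\<dots> = of_nat NG * mat_trace Y" by simp
  finally have "a * of_nat n = of_nat NG * mat_trace Y" using a trace_smult[of "1\<^sub>m n" n a] by simp
  moreover have "n \<ge> 1" using rep_n[OF rr] .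
  ultimately have "a = of_nat NG * mat_trace Y / of_nat n" by (simp add: field_simps)
  thus ?thesis using a by simp
qed

lemma avg_distinct:
  assumes r: "is_irr_rep G n \<rho>" and s: "is_irr_rep G m \<sigma>"
    and ne: "character G \<rho> \<noteq> character G \<sigma>" and X: "X \<in> carrier_mat n m"
  shows "avg \<rho> \<sigma> n m X = 0\<^sub>m n m"
proof (rule ccontr)
  assume T0: "avg \<rho> \<sigma> n m X \<noteq> 0\<^sub>m n m"
  define T where "T = avg \<rho> \<sigma> n m X"
  have T: "T \<in> carrier_mat n m" unfolding T_def by simp
  have rr: "is_rep G n \<rho>" using r unfolding is_irr_rep_def by auto
  have ss: "is_rep G m \<sigma>" using s unfolding is_irr_rep_def by auto
  note rc = rep_carrier[OF rr] and sc = rep_carrier[OF ss]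
  have n1: "n \<ge> 1" using rep_n[OF rr] .
  obtain i0 l0 where i0: "i0 < n" and l0: "l0 < m" and Tne: "T $$ (i0,l0) \<noteq> 0"
    using T0 T unfolding T_def[symmetric] by (metis eq_matI index_zero_mat(1) carrier_matD(1,2) dim_row_mat(1) dim_col_mat(1) zero_mat_def)
  define E where "E = single_mat m n l0 i0"
  define S where "S = avg \<sigma> \<rho> m n E"
  have E: "E \<in> carrier_mat m n" unfolding E_def by simp
  have S: "S \<in> carrier_mat m n" unfolding S_def by simp
  have Tint: "\<And>x. x \<in> carrier G \<Longrightarrow> \<rho> x * T = T * \<sigma> x"
    unfolding T_def by (rule avg_intertwine[OF rr ss X])
  have Sint: "\<And>x. x \<in> carrier G \<Longrightarrow> \<sigma> x * S = S * \<rho> x"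
    unfolding S_def by (rule avg_intertwine[OF ss rr E])
  have TE: "T * E \<in> carrier_mat n n" using T E by simp
  have "T * S = msum n n (carrier G) (\<lambda>g. T * (\<sigma> g * E * \<rho> (inv g)))"
    unfolding S_def avg_def by (rule mult_msum_left[OF T]) (use conj_carrier[OF ss rr E] in auto)
  also have "\<dots> = msum n n (carrier G) (\<lambda>g. \<rho> g * (T * E) * \<rho> (inv g))"
  proof (rule msum_cong)
    fix g assume g: "g \<in> carrier G"
    have "T * (\<sigma> g * E * \<rho> (inv g)) = (T * \<sigma> g) * E * \<rho> (inv g)"
      by (rule assoc_l4) (use T sc[OF g] E rc[of "inv g"] g in auto)
    also have "\<dots> = (\<rho> g * T) * E * \<rho> (inv g)" using Tint[OF g] by simp
    also have "\<dots> = \<rho> g * (T * E) * \<rho> (inv g)"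
      by (rule assoc_m4) (use T rc[OF g] E rc[of "inv g"] g in auto)
    finally show "T * (\<sigma> g * E * \<rho> (inv g)) = \<rho> g * (T * E) * \<rho> (inv g)" .
  qed
  also have "\<dots> = avg \<rho> \<rho> n n (T * E)" unfolding avg_def ..
  also have "\<dots> = (of_nat NG * mat_trace (T * E) / of_nat n) \<cdot>\<^sub>m 1\<^sub>m n" by (rule avg_self[OF r TE])
  finally have TS: "T * S = (of_nat NG * mat_trace (T * E) / of_nat n) \<cdot>\<^sub>m 1\<^sub>m n" .
  have "mat_trace (T * E) = mat_trace (E * T)" by (rule trace_mult_comm[OF T E])
  also have "\<dots> = (\<Sum>i<m. (E * T) $$ (i,i))" using E T by (simp add: mat_trace_def)
  also have "\<dots> = (\<Sum>i<m. (1\<^sub>m m * single_mat m n l0 i0 * T) $$ (i,i))"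
    using left_mult_one_mat[OF single_mat_carrier[of m n l0 i0]] E_def by simp
  also have "\<dots> = (\<Sum>i<m. (1\<^sub>m m $$ (i,l0) * T $$ (i0,i)))"
    by (rule sum.cong[OF refl], rule mult_single_entry) (use T l0 i0 in auto)
  also have "\<dots> = (\<Sum>i<m. if i = l0 then T $$ (i0,i) else 0)" by (rule sum.cong) (use l0 in auto)
  also have "\<dots> = T $$ (i0,l0)" using l0 by simp
  finally have trTE: "mat_trace (T * E) = T $$ (i0,l0)" .
  define lam where "lam = of_nat NG * T $$ (i0,l0) / of_nat n"
  have lam0: "lam \<noteq> 0" unfolding lam_def using Tne NG_pos n1 by simp
  have TS': "T * S = lam \<cdot>\<^sub>m 1\<^sub>m n" using TS trTE unfolding lam_def by simp
  have "\<forall>x\<in>carrier G. \<sigma> x * (S * T) = (S * T) * \<sigma> x"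
  proof
    fix x assume x: "x \<in> carrier G"
    have "\<sigma> x * (S * T) = (\<sigma> x * S) * T" using sc[OF x] S T by (simp add: assoc_mult_mat[of _ m m _ n _ m])
    also have "\<dots> = (S * \<rho> x) * T" using Sint[OF x] by simp
    also have "\<dots> = S * (\<rho> x * T)" using rc[OF x] S T by (simp add: assoc_mult_mat[of _ m n _ n _ m])
    also have "\<dots> = S * (T * \<sigma> x)" using Tint[OF x] by simp
    also have "\<dots> = (S * T) * \<sigma> x" using sc[OF x] S T by (simp add: assoc_mult_mat[of _ m n _ m _ m])
    finally show "\<sigma> x * (S * T) = (S * T) * \<sigma> x" .
  qed
  then obtain mu where ST: "S * T = mu \<cdot>\<^sub>m 1\<^sub>m m" using schur[OF s] S T by (meson mult_carrier_mat)
  have "(T * S) * T = T * (S * T)" using T S by (simp add: assoc_mult_mat[of _ n m _ n _ m])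
  hence "lam \<cdot>\<^sub>m T = mu \<cdot>\<^sub>m T" using TS' ST T
    by (simp add: mult_smult_assoc_mat[of "1\<^sub>m n" n n T m] mult_smult_distrib[of T n m "1\<^sub>m m" m])
  hence "lam * T $$ (i0,l0) = mu * T $$ (i0,l0)"
    by (metis T i0 l0 index_smult_mat(1) carrier_matD(1,2))
  hence lm: "mu = lam" using Tne by simp
  have "mat_trace (T * S) = mat_trace (S * T)" by (rule trace_mult_comm[OF T S])
  hence "lam * of_nat n = lam * of_nat m" using TS' ST lm trace_smult[of "1\<^sub>m n" n lam] trace_smult[of "1\<^sub>m m" m lam] by simp
  hence nm: "n = m" using lam0 by simp
  have "character G \<rho> = character G \<sigma>"
  proof
    fix g show "character G \<rho> g = character G \<sigma> g"
    proof (cases "g \<in> carrier G")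
      case False thus ?thesis by (simp add: character_def)
    next
      case g: True
      have "mat_trace (\<sigma> g * (S * T)) = mat_trace (\<sigma> g * S * T)"
        using sc[OF g] S T by (simp add: assoc_mult_mat[of _ m m _ n _ m])
      also have "\<dots> = mat_trace (S * \<rho> g * T)" using Sint[OF g] by simp
      also have "\<dots> = mat_trace (S * (\<rho> g * T))" using rc[OF g] S T by (simp add: assoc_mult_mat[of _ m n _ n _ m])
      also have "\<dots> = mat_trace ((\<rho> g * T) * S)" by (rule trace_mult_comm) (use S T rc[OF g] in auto)
      also have "\<dots> = mat_trace (\<rho> g * (T * S))" using rc[OF g] S T by (simp add: assoc_mult_mat[of _ n n _ m _ n])
      finally have "lam * mat_trace (\<sigma> g) = lam * mat_trace (\<rho> g)"
        using ST TS' lm sc[OF g] rc[OF g] trace_smult[of "\<sigma> g" m lam] trace_smult[of "\<rho> g" n lam]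
        by (simp add: mult_smult_distrib[of "\<sigma> g" m m "1\<^sub>m m" m] mult_smult_distrib[of "\<rho> g" n n "1\<^sub>m n" n])
      thus ?thesis using lam0 g by (simp add: character_def)
    qed
  qed
  thus False using ne by simp
qed

end


context fgroup
begin

lemma char_sum_avg:
  assumes r: "is_rep G n \<rho>" and s: "is_rep G m \<sigma>"
  shows "(\<Sum>g\<in>carrier G. character G \<rho> g * character G \<sigma> (inv g)) =
    (\<Sum>i<n. \<Sum>k<m. avg \<rho> \<sigma> n m (single_mat n m i k) $$ (i,k))"
proof -
  have "(\<Sum>i<n. \<Sum>k<m. avg \<rho> \<sigma> n m (single_mat n m i k) $$ (i,k)) =
        (\<Sum>i<n. \<Sum>k<m. \<Sum>g\<in>carrier G. \<rho> g $$ (i,i) * \<sigma> (inv g) $$ (k,k))"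
  proof (intro sum.cong refl)
    fix i k assume i: "i \<in> {..<n}" and k: "k \<in> {..<m}"
    show "avg \<rho> \<sigma> n m (single_mat n m i k) $$ (i,k) = (\<Sum>g\<in>carrier G. \<rho> g $$ (i,i) * \<sigma> (inv g) $$ (k,k))"
      unfolding avg_def using i k
      by (auto intro!: sum.cong mult_single_entry rep_carrier[OF r] rep_carrier[OF s])
  qed
  also have "\<dots> = (\<Sum>i<n. \<Sum>g\<in>carrier G. \<Sum>k<m. \<rho> g $$ (i,i) * \<sigma> (inv g) $$ (k,k))"
    by (intro sum.cong refl) (rule sum.swap)
  also have "\<dots> = (\<Sum>g\<in>carrier G. \<Sum>i<n. \<Sum>k<m. \<rho> g $$ (i,i) * \<sigma> (inv g) $$ (k,k))"
    by (rule sum.swap)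
  also have "\<dots> = (\<Sum>g\<in>carrier G. (\<Sum>i<n. \<rho> g $$ (i,i)) * (\<Sum>k<m. \<sigma> (inv g) $$ (k,k)))"
    by (simp only: sum_product)
  also have "\<dots> = (\<Sum>g\<in>carrier G. character G \<rho> g * character G \<sigma> (inv g))"
  proof (rule sum.cong[OF refl])
    fix g assume g: "g \<in> carrier G"
    have "\<rho> g \<in> carrier_mat n n" "\<sigma> (inv g) \<in> carrier_mat m m"
      using rep_carrier[OF r g] rep_carrier[OF s inv_closed[OF g]] .
    thus "(\<Sum>i<n. \<rho> g $$ (i,i)) * (\<Sum>k<m. \<sigma> (inv g) $$ (k,k)) = character G \<rho> g * character G \<sigma> (inv g)"
      using g by (simp add: character_def mat_trace_def)
  qed
  finally show ?thesis by simp
qed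

lemma orth_irr:
  assumes r: "is_irr_rep G n \<rho>" and s: "is_irr_rep G m \<sigma>"
  shows "(\<Sum>g\<in>carrier G. character G \<rho> g * character G \<sigma> (inv g)) =
    (if character G \<rho> = character G \<sigma> then of_nat NG else 0)"
proof -
  have rr: "is_rep G n \<rho>" using r unfolding is_irr_rep_def by auto
  have ss: "is_rep G m \<sigma>" using s unfolding is_irr_rep_def by auto
  show ?thesis
  proof (cases "character G \<rho> = character G \<sigma>")
    case False
    have "(\<Sum>g\<in>carrier G. character G \<rho> g * character G \<sigma> (inv g)) =
      (\<Sum>i<n. \<Sum>k<m. avg \<rho> \<sigma> n m (single_mat n m i k) $$ (i,k))" by (rule char_sum_avg[OF rr ss])
    also have "\<dots> = 0" using avg_distinct[OF r s False] by simp
    finally show ?thesis using False by simp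
  next
    case True
    have n1: "n \<ge> 1" using rep_n[OF rr] .
    have "(\<Sum>g\<in>carrier G. character G \<rho> g * character G \<sigma> (inv g)) =
      (\<Sum>g\<in>carrier G. character G \<rho> g * character G \<rho> (inv g))" using True by simp
    also have "\<dots> = (\<Sum>i<n. \<Sum>k<n. avg \<rho> \<rho> n n (single_mat n n i k) $$ (i,k))" by (rule char_sum_avg[OF rr rr])
    also have "\<dots> = (\<Sum>i<n. \<Sum>k<n. if k = i then of_nat NG / of_nat n else 0)"
    proof (intro sum.cong refl)
      fix i k assume i: "i \<in> {..<n}" and k: "k \<in> {..<n}"
      show "avg \<rho> \<rho> n n (single_mat n n i k) $$ (i,k) = (if k = i then of_nat NG / of_nat n else 0)"
        using avg_self[OF r single_mat_carrier] i k trace_single[of i n k] by auto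
    qed
    also have "\<dots> = of_nat n * (of_nat NG / of_nat n)" by simp
    also have "\<dots> = of_nat NG" using n1 by simp
    finally show ?thesis using True by simp
  qed
qed

lemma IrrE:
  assumes "\<chi> \<in> Irr G"
  obtains n \<rho> where "is_irr_rep G n \<rho>" "\<chi> = character G \<rho>"
  using assms unfolding Irr_def by blast

lemma Irr_facts:
  assumes "\<chi> \<in> Irr G"
  shows "\<And>g. g \<in> carrier G \<Longrightarrow> \<chi> (inv g) = cnj (\<chi> g)"
    "\<And>g. g \<notin> carrier G \<Longrightarrow> \<chi> g = 0"
    "\<And>g. g \<in> carrier G \<Longrightarrow> cmod (\<chi> g) \<le> cmod (\<chi> \<one>)"
    "\<chi> \<one> = of_real (cmod (\<chi> \<one>))" "cmod (\<chi> \<one>) \<ge> 1"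
    "\<And>g x. g \<in> carrier G \<Longrightarrow> x \<in> carrier G \<Longrightarrow> \<chi> (x \<otimes> g \<otimes> inv x) = \<chi> g"
proof -
  obtain n \<rho> where r: "is_irr_rep G n \<rho>" and c: "\<chi> = character G \<rho>" using assms by (rule IrrE)
  have rr: "is_rep G n \<rho>" using r unfolding is_irr_rep_def by auto
  have one: "\<chi> \<one> = of_nat n" using character_one[OF rr] c by simp
  show "\<And>g. g \<in> carrier G \<Longrightarrow> \<chi> (inv g) = cnj (\<chi> g)" using character_facts(1)[OF rr] c by simp
  show "\<And>g. g \<notin> carrier G \<Longrightarrow> \<chi> g = 0" using c by (simp add: character_def)
  show "\<And>g. g \<in> carrier G \<Longrightarrow> cmod (\<chi> g) \<le> cmod (\<chi> \<one>)" using character_facts(2)[OF rr] c one by simp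
  show "\<chi> \<one> = of_real (cmod (\<chi> \<one>))" using one by simp
  show "cmod (\<chi> \<one>) \<ge> 1" using one rep_n[OF rr] by simp
  show "\<And>g x. g \<in> carrier G \<Longrightarrow> x \<in> carrier G \<Longrightarrow> \<chi> (x \<otimes> g \<otimes> inv x) = \<chi> g"
    using character_conj[OF rr] c by simp
qed

lemma Irr_orth:
  assumes "\<chi> \<in> Irr G" "\<psi> \<in> Irr G"
  shows "(\<Sum>g\<in>carrier G. \<chi> g * cnj (\<psi> g)) = (if \<chi> = \<psi> then of_nat NG else 0)"
proof -
  obtain n \<rho> where r: "is_irr_rep G n \<rho>" and c: "\<chi> = character G \<rho>" using assms(1) by (rule IrrE)
  obtain m \<sigma> where s: "is_irr_rep G m \<sigma>" and d: "\<psi> = character G \<sigma>" using assms(2) by (rule IrrE)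
  have "(\<Sum>g\<in>carrier G. \<chi> g * cnj (\<psi> g)) = (\<Sum>g\<in>carrier G. \<chi> g * \<psi> (inv g))"
    using Irr_facts(1)[OF assms(2)] by simp
  also have "\<dots> = (if \<chi> = \<psi> then of_nat NG else 0)" using orth_irr[OF r s] c d by simp
  finally show ?thesis .
qed

lemma Irr_finite_bound:
  assumes F: "finite F" "F \<subseteq> Irr G"
  shows "card F \<le> NG"
proof -
  define S where "S = (\<Sum>\<chi>\<in>F. (cmod (\<chi> \<one>))^2)"
  define w where "w = (\<lambda>g. \<Sum>\<chi>\<in>F. cnj (\<chi> \<one>) * \<chi> g)"
  have inF: "\<And>\<chi>. \<chi> \<in> F \<Longrightarrow> \<chi> \<in> Irr G" using F by auto
  have wg: "w g * cnj (w g) = (\<Sum>\<chi>\<in>F. \<Sum>\<psi>\<in>F. (cnj (\<chi> \<one>) * \<psi> \<one>) * (\<chi> g * cnj (\<psi> g)))" for g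
    unfolding w_def cnj_sum sum_product by (intro sum.cong refl) (simp add: mult_ac)
  have "(\<Sum>g\<in>carrier G. w g * cnj (w g)) =
      (\<Sum>g\<in>carrier G. \<Sum>\<chi>\<in>F. \<Sum>\<psi>\<in>F. (cnj (\<chi> \<one>) * \<psi> \<one>) * (\<chi> g * cnj (\<psi> g)))"
    by (simp only: wg)
  also have "\<dots> = (\<Sum>\<chi>\<in>F. \<Sum>g\<in>carrier G. \<Sum>\<psi>\<in>F. (cnj (\<chi> \<one>) * \<psi> \<one>) * (\<chi> g * cnj (\<psi> g)))"
    by (rule sum.swap)
  also have "\<dots> = (\<Sum>\<chi>\<in>F. \<Sum>\<psi>\<in>F. \<Sum>g\<in>carrier G. (cnj (\<chi> \<one>) * \<psi> \<one>) * (\<chi> g * cnj (\<psi> g)))"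
    by (intro sum.cong refl) (rule sum.swap)
  also have "\<dots> = (\<Sum>\<chi>\<in>F. \<Sum>\<psi>\<in>F. (cnj (\<chi> \<one>) * \<psi> \<one>) * (\<Sum>g\<in>carrier G. \<chi> g * cnj (\<psi> g)))"
    by (simp only: sum_distrib_left)
  also have "\<dots> = (\<Sum>\<chi>\<in>F. \<Sum>\<psi>\<in>F. if \<chi> = \<psi> then cnj (\<chi> \<one>) * \<chi> \<one> * of_nat NG else 0)"
    by (intro sum.cong refl) (auto simp: Irr_orth inF)
  also have "\<dots> = (\<Sum>\<chi>\<in>F. cnj (\<chi> \<one>) * \<chi> \<one> * of_nat NG)"
    using F(1) by simp
  also have "\<dots> = (\<Sum>\<chi>\<in>F. of_real (of_nat NG * (cmod (\<chi> \<one>))^2))"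
  proof (rule sum.cong[OF refl])
    fix \<chi> :: "'a \<Rightarrow> complex"
    have "cnj (\<chi> \<one>) * \<chi> \<one> = of_real ((cmod (\<chi> \<one>))^2)"
      by (metis complex_norm_square mult.commute)
    thus "cnj (\<chi> \<one>) * \<chi> \<one> * of_nat NG = of_real (of_nat NG * (cmod (\<chi> \<one>))^2)"
      by (simp add: mult.commute)
  qed
  also have "\<dots> = of_real (of_nat NG * S)"
    unfolding S_def of_real_sum[symmetric] sum_distrib_left ..
  finally have e1: "(\<Sum>g\<in>carrier G. w g * cnj (w g)) = of_real (of_nat NG * S)" .
  have "(\<Sum>g\<in>carrier G. w g * cnj (w g)) = (\<Sum>g\<in>carrier G. of_real ((cmod (w g))^2))"
    by (rule sum.cong[OF refl]) (metis complex_norm_square)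
  also have "\<dots> = of_real (\<Sum>g\<in>carrier G. (cmod (w g))^2)" by (rule of_real_sum[symmetric])
  finally have "(\<Sum>g\<in>carrier G. w g * cnj (w g)) = of_real (\<Sum>g\<in>carrier G. (cmod (w g))^2)" .
  with e1 have e2: "(\<Sum>g\<in>carrier G. (cmod (w g))^2) = of_nat NG * S" by (metis of_real_eq_iff)
  have w1: "w \<one> = of_real S"
  proof -
    have "w \<one> = (\<Sum>\<chi>\<in>F. of_real ((cmod (\<chi> \<one>))^2))"
      unfolding w_def by (rule sum.cong[OF refl]) (metis complex_norm_square mult.commute)
    thus ?thesis unfolding S_def of_real_sum .
  qed
  have "(cmod (w \<one>))^2 \<le> (\<Sum>g\<in>carrier G. (cmod (w g))^2)"
    by (rule member_le_sum) (auto simp: fin)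
  moreover have S0: "S \<ge> 0" unfolding S_def by (simp add: sum_nonneg)
  moreover have "cmod (w \<one>) = S" unfolding w1 using S0 by (simp only: norm_of_real abs_of_nonneg)
  ultimately have SS: "S^2 \<le> of_nat NG * S" using e2 by simp
  have SN: "S \<le> of_nat NG"
  proof (cases "S = 0")
    case True thus ?thesis by simp
  next
    case False hence "S > 0" using S0 by simp
    thus ?thesis using SS by (simp add: power2_eq_square)
  qed
  have "real (card F) = (\<Sum>\<chi>\<in>F. 1)" by simp
  also have "\<dots> \<le> S" unfolding S_def
  proof (rule sum_mono)
    fix \<chi> assume "\<chi> \<in> F"
    hence "cmod (\<chi> \<one>) \<ge> 1" using Irr_facts(5) inF by blast
    thus "1 \<le> (cmod (\<chi> \<one>))^2" by (simp add: one_le_power)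
  qed
  finally show ?thesis using SN by simp
qed

lemma Irr_finite: "finite (Irr G)"
proof (rule ccontr)
  assume "infinite (Irr G)"
  then obtain F where "F \<subseteq> Irr G" "finite F" "card F = Suc NG" using infinite_arbitrarily_large by blast
  thus False using Irr_finite_bound by fastforce
qed

end


lemma split_sum:
  fixes f :: "nat \<Rightarrow> 'c::comm_monoid_add" and k d :: nat
  shows "(\<Sum>l<k + d. f l) = (\<Sum>l<k. f l) + (\<Sum>l<d. f (l + k))"
  by (induction d) (auto simp: add.commute add.left_commute)

lemma split_sum':
  fixes f :: "nat \<Rightarrow> 'c::comm_monoid_add" and k n :: nat
  shows "k \<le> n \<Longrightarrow> (\<Sum>l<n. f l) = (\<Sum>l<k. f l) + (\<Sum>l<n - k. f (l + k))"
  using split_sum[of f k "n - k"] by simp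

lemma mult_unit_col:
  fixes P :: "complex mat"
  assumes P: "P \<in> carrier_mat n m" and j: "j < m"
  shows "P *\<^sub>v unit_vec m j = col P j"
  by (rule eq_vecI) (use P j mult_unit_entry[OF P j] in auto)

lemma conj_mult:
  fixes P Q A C :: "complex mat"
  assumes P: "P \<in> carrier_mat n n" and Q: "Q \<in> carrier_mat n n" and A: "A \<in> carrier_mat n n"
    and C: "C \<in> carrier_mat n n" and PQ: "P * Q = 1\<^sub>m n"
  shows "(Q * A * P) * (Q * C * P) = Q * (A * C) * P"
proof -
  have PQX: "\<And>X. X \<in> carrier_mat n n \<Longrightarrow> P * (Q * X) = X"
    using P Q PQ by (metis assoc_mult_mat left_mult_one_mat)
  have "(Q * A * P) * (Q * C * P) = Q * (A * (P * (Q * (C * P))))"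
    using P Q A C by (simp add: assoc_mult_mat[of _ n n _ n _ n])
  also have "P * (Q * (C * P)) = C * P" using PQX C P by simp
  also have "Q * (A * (C * P)) = Q * (A * C) * P"
    using P Q A C by (simp add: assoc_mult_mat[of _ n n _ n _ n])
  finally show ?thesis .
qed

context fgroup
begin

lemma rep_split:
  assumes r: "is_rep G n \<rho>" and nirr: "\<not> is_irr_rep G n \<rho>"
  shows "\<exists>k1 \<rho>1 k2 \<rho>2. k1 < n \<and> k2 < n \<and> is_rep G k1 \<rho>1 \<and> is_rep G k2 \<rho>2 \<and>
    (\<forall>g\<in>carrier G. mat_trace (\<rho> g) = mat_trace (\<rho>1 g) + mat_trace (\<rho>2 g))"
proof -
  note rc = rep_carrier[OF r]
  obtain W where W: "is_subspace n W" "\<forall>g\<in>carrier G. \<forall>v\<in>W. \<rho> g *\<^sub>v v \<in> W"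
    "W \<noteq> {0\<^sub>v n}" "W \<noteq> carrier_vec n"
    using nirr r unfolding is_irr_rep_def by blast
  obtain k P Q where k: "0 < k" "k < n" and P: "P \<in> carrier_mat n n" and Q: "Q \<in> carrier_mat n n"
    and QP: "Q * P = 1\<^sub>m n" and PQ: "P * Q = 1\<^sub>m n" and colW: "\<forall>j<k. col P j \<in> W"
    and spanW: "\<forall>w\<in>W. \<exists>c\<in>carrier_vec n. w = P *\<^sub>v c \<and> (\<forall>i. k \<le> i \<longrightarrow> i < n \<longrightarrow> c $ i = 0)"
    using block_basis[OF W(1) W(3) W(4)] by blast
  define B where "B = (\<lambda>g. Q * \<rho> g * P)"
  have Bc: "\<And>g. g \<in> carrier G \<Longrightarrow> B g \<in> carrier_mat n n" unfolding B_def using P Q rc by auto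
  have Bmult: "\<And>g h. g \<in> carrier G \<Longrightarrow> h \<in> carrier G \<Longrightarrow> B (g \<otimes> h) = B g * B h"
    unfolding B_def using conj_mult[OF P Q rc rc PQ] rep_mult[OF r] by simp
  have B1: "B \<one> = 1\<^sub>m n" unfolding B_def using rep_one[OF r] P Q QP by simp
  have Bz: "B g $$ (i,j) = 0" if g: "g \<in> carrier G" and i: "k \<le> i" "i < n" and j: "j < k" for g i j
  proof -
    have jn: "j < n" using j k by simp
    have "\<rho> g *\<^sub>v col P j \<in> W" using W(2) colW g j by blast
    then obtain c where c: "c \<in> carrier_vec n" "\<rho> g *\<^sub>v col P j = P *\<^sub>v c"
      and c0: "\<forall>i. k \<le> i \<longrightarrow> i < n \<longrightarrow> c $ i = 0" using spanW by blast
    have "B g *\<^sub>v unit_vec n j = (Q * \<rho> g) *\<^sub>v (P *\<^sub>v unit_vec n j)"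
      unfolding B_def by (rule assoc_mult_mat_vec) (use P Q rc[OF g] in auto)
    also have "\<dots> = Q *\<^sub>v (\<rho> g *\<^sub>v (P *\<^sub>v unit_vec n j))"
      by (rule assoc_mult_mat_vec) (use P Q rc[OF g] in auto)
    also have "P *\<^sub>v unit_vec n j = col P j" by (rule mult_unit_col[OF P jn])
    also have "Q *\<^sub>v (\<rho> g *\<^sub>v col P j) = (Q * P) *\<^sub>v c" using c P Q by simp
    also have "\<dots> = c" using QP c by simp
    finally have "B g *\<^sub>v unit_vec n j = c" .
    hence "B g $$ (i,j) = c $ i" using mult_unit_entry[OF Bc[OF g] jn i(2)] by simp
    thus ?thesis using c0 i by simp
  qed
  define \<rho>1 where "\<rho>1 = (\<lambda>g. mat k k (\<lambda>(i,j). B g $$ (i,j)))"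
  define \<rho>2 where "\<rho>2 = (\<lambda>g. mat (n - k) (n - k) (\<lambda>(i,j). B g $$ (i + k, j + k)))"
  have r1: "is_rep G k \<rho>1" unfolding is_rep_def
  proof (intro conjI ballI)
    show "1 \<le> k" using k by simp
    show "\<rho>1 \<one> = 1\<^sub>m k" unfolding \<rho>1_def B1 using k by (auto intro!: eq_matI)
  next
    fix g assume "g \<in> carrier G" thus "\<rho>1 g \<in> carrier_mat k k" unfolding \<rho>1_def by simp
  next
    fix g h assume g: "g \<in> carrier G" and h: "h \<in> carrier G"
    show "\<rho>1 (g \<otimes> h) = \<rho>1 g * \<rho>1 h"
    proof (rule eq_matI)
      fix i j assume "i < dim_row (\<rho>1 g * \<rho>1 h)" "j < dim_col (\<rho>1 g * \<rho>1 h)"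
      hence i: "i < k" and j: "j < k" unfolding \<rho>1_def by auto
      have "\<rho>1 (g \<otimes> h) $$ (i,j) = (B g * B h) $$ (i,j)" unfolding \<rho>1_def using i j Bmult[OF g h] by simp
      also have "\<dots> = (\<Sum>l<n. B g $$ (i,l) * B h $$ (l,j))"
        by (rule mult_entry[OF Bc[OF g] Bc[OF h]]) (use i j k in auto)
      also have "\<dots> = (\<Sum>l<k. B g $$ (i,l) * B h $$ (l,j)) + (\<Sum>l<n - k. B g $$ (i,l + k) * B h $$ (l + k,j))"
        by (rule split_sum') (use k in simp)
      also have "(\<Sum>l<n - k. B g $$ (i,l + k) * B h $$ (l + k,j)) = 0"
        by (rule sum.neutral) (use Bz[OF h] j in auto)
      also have "(\<Sum>l<k. B g $$ (i,l) * B h $$ (l,j)) = (\<rho>1 g * \<rho>1 h) $$ (i,j)"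
        unfolding \<rho>1_def using i j by (simp add: scalar_prod_def lessThan_atLeast0)
      finally show "\<rho>1 (g \<otimes> h) $$ (i,j) = (\<rho>1 g * \<rho>1 h) $$ (i,j)" by simp
    qed (auto simp: \<rho>1_def)
  qed
  have r2: "is_rep G (n - k) \<rho>2" unfolding is_rep_def
  proof (intro conjI ballI)
    show "1 \<le> n - k" using k by simp
    show "\<rho>2 \<one> = 1\<^sub>m (n - k)" unfolding \<rho>2_def B1 using k by (auto intro!: eq_matI)
  next
    fix g assume "g \<in> carrier G" thus "\<rho>2 g \<in> carrier_mat (n - k) (n - k)" unfolding \<rho>2_def by simp
  next
    fix g h assume g: "g \<in> carrier G" and h: "h \<in> carrier G"
    show "\<rho>2 (g \<otimes> h) = \<rho>2 g * \<rho>2 h"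
    proof (rule eq_matI)
      fix i j assume "i < dim_row (\<rho>2 g * \<rho>2 h)" "j < dim_col (\<rho>2 g * \<rho>2 h)"
      hence i: "i < n - k" and j: "j < n - k" unfolding \<rho>2_def by auto
      have "\<rho>2 (g \<otimes> h) $$ (i,j) = (B g * B h) $$ (i + k,j + k)" unfolding \<rho>2_def using i j Bmult[OF g h] by simp
      also have "\<dots> = (\<Sum>l<n. B g $$ (i + k,l) * B h $$ (l,j + k))"
        by (rule mult_entry[OF Bc[OF g] Bc[OF h]]) (use i j k in auto)
      also have "\<dots> = (\<Sum>l<k. B g $$ (i + k,l) * B h $$ (l,j + k)) + (\<Sum>l<n - k. B g $$ (i + k,l + k) * B h $$ (l + k,j + k))"
        by (rule split_sum') (use k in simp)
      also have "(\<Sum>l<k. B g $$ (i + k,l) * B h $$ (l,j + k)) = 0"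
        by (rule sum.neutral) (use Bz[OF g] i in auto)
      also have "(\<Sum>l<n - k. B g $$ (i + k,l + k) * B h $$ (l + k,j + k)) = (\<rho>2 g * \<rho>2 h) $$ (i,j)"
        unfolding \<rho>2_def using i j by (simp add: scalar_prod_def lessThan_atLeast0)
      finally show "\<rho>2 (g \<otimes> h) $$ (i,j) = (\<rho>2 g * \<rho>2 h) $$ (i,j)" by simp
    qed (auto simp: \<rho>2_def)
  qed
  have tr: "mat_trace (\<rho> g) = mat_trace (\<rho>1 g) + mat_trace (\<rho>2 g)" if g: "g \<in> carrier G" for g
  proof -
    have "mat_trace (\<rho> g) = mat_trace (B g)" unfolding B_def
      by (rule trace_similar[symmetric]) (use Q P PQ rc[OF g] in auto)
    also have "\<dots> = (\<Sum>i<n. B g $$ (i,i))" using Bc[OF g] by (simp add: mat_trace_def)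
    also have "\<dots> = (\<Sum>i<k. B g $$ (i,i)) + (\<Sum>i<n - k. B g $$ (i + k,i + k))"
      by (rule split_sum') (use k in simp)
    also have "\<dots> = mat_trace (\<rho>1 g) + mat_trace (\<rho>2 g)"
      unfolding \<rho>1_def \<rho>2_def mat_trace_def by simp
    finally show ?thesis .
  qed
  show ?thesis using r1 r2 tr k by (intro exI[of _ k] exI[of _ \<rho>1] exI[of _ "n - k"] exI[of _ \<rho>2]) auto
qed

end


context fgroup
begin

lemma trace_msum_smult:
  assumes r: "is_rep G n \<rho>"
  shows "mat_trace (msum n n (carrier G) (\<lambda>g. F g \<cdot>\<^sub>m \<rho> g)) = (\<Sum>g\<in>carrier G. F g * mat_trace (\<rho> g))"
proof -
  have "mat_trace (msum n n (carrier G) (\<lambda>g. F g \<cdot>\<^sub>m \<rho> g)) = (\<Sum>g\<in>carrier G. mat_trace (F g \<cdot>\<^sub>m \<rho> g))"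
    by (rule trace_msum) (use rep_carrier[OF r] in auto)
  also have "\<dots> = (\<Sum>g\<in>carrier G. F g * mat_trace (\<rho> g))"
    by (rule sum.cong[OF refl]) (use rep_carrier[OF r] trace_smult in auto)
  finally show ?thesis .
qed

lemma tr_zero_all_reps:
  assumes irr0: "\<forall>k \<sigma>. is_irr_rep G k \<sigma> \<longrightarrow> msum k k (carrier G) (\<lambda>g. F g \<cdot>\<^sub>m \<sigma> g) = 0\<^sub>m k k"
  shows "is_rep G n \<rho> \<Longrightarrow> (\<Sum>g\<in>carrier G. F g * mat_trace (\<rho> g)) = 0"
proof (induction n arbitrary: \<rho> rule: less_induct)
  case (less n \<rho>)
  show ?case
  proof (cases "is_irr_rep G n \<rho>")
    case True
    have "(\<Sum>g\<in>carrier G. F g * mat_trace (\<rho> g)) = mat_trace (msum n n (carrier G) (\<lambda>g. F g \<cdot>\<^sub>m \<rho> g))"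
      by (rule trace_msum_smult[OF less.prems, symmetric])
    also have "\<dots> = 0" using irr0 True by (simp add: mat_trace_def)
    finally show ?thesis .
  next
    case False
    obtain k1 \<rho>1 k2 \<rho>2 where s: "k1 < n" "k2 < n" "is_rep G k1 \<rho>1" "is_rep G k2 \<rho>2"
      "\<forall>g\<in>carrier G. mat_trace (\<rho> g) = mat_trace (\<rho>1 g) + mat_trace (\<rho>2 g)"
      using rep_split[OF less.prems False] by blast
    have "(\<Sum>g\<in>carrier G. F g * mat_trace (\<rho> g)) =
      (\<Sum>g\<in>carrier G. F g * mat_trace (\<rho>1 g)) + (\<Sum>g\<in>carrier G. F g * mat_trace (\<rho>2 g))"
      using s(5) by (simp add: distrib_left sum.distrib)
    also have "\<dots> = 0" using less.IH[OF s(1) s(3)] less.IH[OF s(2) s(4)] by simp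
    finally show ?thesis .
  qed
qed

lemma regular_rep:
  "\<exists>R. is_rep G NG R \<and> (\<forall>g\<in>carrier G. mat_trace (R g) = (if g = \<one> then of_nat NG else 0))"
proof -
  obtain xs where xs: "set xs = carrier G" "distinct xs" using finite_distinct_list[OF fin] by blast
  have len: "length xs = NG" using distinct_card[OF xs(2)] xs(1) by simp
  have inxs: "xs ! i \<in> carrier G" if i: "i < NG" for i
  proof -
    have "xs ! i \<in> set xs" using i len by simp
    thus ?thesis using xs(1) by simp
  qed
  have idx: "\<exists>l<NG. xs ! l = x" if x: "x \<in> carrier G" for x
  proof -
    have "x \<in> set xs" using x xs(1) by simp
    then obtain l where l: "l < length xs" "xs ! l = x" unfolding in_set_conv_nth by blast
    show ?thesis by (rule exI[of _ l]) (use l len in simp)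
  qed
  have inj: "\<And>i j. i < NG \<Longrightarrow> j < NG \<Longrightarrow> xs ! i = xs ! j \<longleftrightarrow> i = j"
    using xs(2) len by (simp add: nth_eq_iff_index_eq)
  define R where "R = (\<lambda>g. mat NG NG (\<lambda>(i,j). if xs ! i = g \<otimes> xs ! j then 1 else (0::complex)))"
  have Rc: "\<And>g. R g \<in> carrier_mat NG NG" unfolding R_def by simp
  have rep: "is_rep G NG R" unfolding is_rep_def
  proof (intro conjI ballI)
    show "1 \<le> NG" using NG_pos by simp
    show "R \<one> = 1\<^sub>m NG"
    proof (rule eq_matI)
      fix i j assume "i < dim_row (1\<^sub>m NG :: complex mat)" "j < dim_col (1\<^sub>m NG :: complex mat)"
      hence i: "i < NG" and j: "j < NG" by auto
      have "\<one> \<otimes> xs ! j = xs ! j" using inxs[OF j] by simp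
      thus "R \<one> $$ (i,j) = 1\<^sub>m NG $$ (i,j)" unfolding R_def using i j inj[OF i j] by simp
    qed (simp_all add: R_def)
  next
    fix g assume "g \<in> carrier G" show "R g \<in> carrier_mat NG NG" by (rule Rc)
  next
    fix g h assume g: "g \<in> carrier G" and h: "h \<in> carrier G"
    show "R (g \<otimes> h) = R g * R h"
    proof (rule eq_matI)
      fix i j assume "i < dim_row (R g * R h)" "j < dim_col (R g * R h)"
      hence i: "i < NG" and j: "j < NG" unfolding R_def by auto
      obtain l0 where l0: "l0 < NG" "xs ! l0 = h \<otimes> xs ! j" using idx[of "h \<otimes> xs ! j"] h inxs[OF j] by blast
      have "(R g * R h) $$ (i,j) = (\<Sum>l<NG. R g $$ (i,l) * R h $$ (l,j))"
        by (rule mult_entry[OF Rc Rc i j])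
      also have "\<dots> = (\<Sum>l<NG. if l = l0 then (if xs ! i = g \<otimes> (h \<otimes> xs ! j) then 1 else 0) else 0)"
      proof (rule sum.cong[OF refl])
        fix l assume "l \<in> {..<NG}" hence l: "l < NG" by simp
        show "R g $$ (i,l) * R h $$ (l,j) = (if l = l0 then (if xs ! i = g \<otimes> (h \<otimes> xs ! j) then 1 else 0) else 0)"
        proof (cases "l = l0")
          case True thus ?thesis using l0 i j l unfolding R_def by simp
        next
          case False
          hence "xs ! l \<noteq> h \<otimes> xs ! j" using inj[OF l l0(1)] l0(2) by simp
          thus ?thesis using False i j l unfolding R_def by simp
        qed
      qed
      also have "\<dots> = (if xs ! i = g \<otimes> (h \<otimes> xs ! j) then 1 else 0)" using l0 by simp
      also have "\<dots> = R (g \<otimes> h) $$ (i,j)" unfolding R_def using i j g h inxs[OF j] by (simp add: m_assoc)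
      finally show "R (g \<otimes> h) $$ (i,j) = (R g * R h) $$ (i,j)" by simp
    qed (auto simp: R_def)
  qed
  have tr: "mat_trace (R g) = (if g = \<one> then of_nat NG else 0)" if g: "g \<in> carrier G" for g
  proof -
    have "mat_trace (R g) = (\<Sum>i<NG. if xs ! i = g \<otimes> xs ! i then 1 else 0)"
      unfolding mat_trace_def R_def by simp
    also have "\<dots> = (\<Sum>i<NG. if g = \<one> then 1 else 0)"
    proof (rule sum.cong[OF refl])
      fix i assume "i \<in> {..<NG}" hence x: "xs ! i \<in> carrier G" using inxs by simp
      have "xs ! i = g \<otimes> xs ! i \<longleftrightarrow> g = \<one>" by (rule r_cancel_one'[OF x g])
      thus "(if xs ! i = g \<otimes> xs ! i then 1 else 0) = (if g = \<one> then (1::complex) else 0)" by simp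
    qed
    also have "\<dots> = (if g = \<one> then of_nat NG else 0)" by simp
    finally show ?thesis .
  qed
  show ?thesis using rep tr by blast
qed

lemma cancel_l1: "x \<in> carrier G \<Longrightarrow> y \<in> carrier G \<Longrightarrow> x \<otimes> (inv x \<otimes> y) = y"
  by (simp add: m_assoc[symmetric])

lemma cancel_l2: "x \<in> carrier G \<Longrightarrow> y \<in> carrier G \<Longrightarrow> inv x \<otimes> (x \<otimes> y) = y"
  by (simp add: m_assoc[symmetric])

lemma bij_conj: "x \<in> carrier G \<Longrightarrow> bij_betw (\<lambda>h. inv x \<otimes> h \<otimes> x) (carrier G) (carrier G)"
  by (rule bij_betwI[where g = "\<lambda>h. x \<otimes> h \<otimes> inv x"]) (auto simp: m_assoc cancel_l1 cancel_l2)

lemma bij_rmult: "y \<in> carrier G \<Longrightarrow> bij_betw (\<lambda>h. h \<otimes> y) (carrier G) (carrier G)"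
  by (rule bij_betwI[where g = "\<lambda>h. h \<otimes> inv y"]) (auto simp: m_assoc)

lemma completeness:
  assumes orth: "\<forall>\<chi>\<in>Irr G. (\<Sum>g\<in>carrier G. f g * \<chi> g) = 0"
    and cls: "\<forall>g\<in>carrier G. \<forall>x\<in>carrier G. f (x \<otimes> g \<otimes> inv x) = f g"
    and y: "y \<in> carrier G"
  shows "f y = 0"
proof -
  have A0: "msum k k (carrier G) (\<lambda>g. f g \<cdot>\<^sub>m \<sigma> g) = 0\<^sub>m k k" if s: "is_irr_rep G k \<sigma>" for k \<sigma>
  proof -
    have ss: "is_rep G k \<sigma>" using s unfolding is_irr_rep_def by auto
    note sc = rep_carrier[OF ss]
    define A where "A = msum k k (carrier G) (\<lambda>g. f g \<cdot>\<^sub>m \<sigma> g)"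
    have A: "A \<in> carrier_mat k k" unfolding A_def by simp
    have comm: "\<forall>x\<in>carrier G. \<sigma> x * A = A * \<sigma> x"
    proof
      fix x assume x: "x \<in> carrier G"
      have "\<sigma> x * A = msum k k (carrier G) (\<lambda>g. \<sigma> x * (f g \<cdot>\<^sub>m \<sigma> g))"
        unfolding A_def by (rule mult_msum_left[OF sc[OF x]]) (use sc in auto)
      also have "\<dots> = msum k k (carrier G) (\<lambda>g. f g \<cdot>\<^sub>m \<sigma> (x \<otimes> g))"
      proof (rule msum_cong)
        fix g assume g: "g \<in> carrier G"
        show "\<sigma> x * (f g \<cdot>\<^sub>m \<sigma> g) = f g \<cdot>\<^sub>m \<sigma> (x \<otimes> g)"
          using mult_smult_distrib[OF sc[OF x] sc[OF g]] rep_mult[OF ss x g] by simp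
      qed
      also have "\<dots> = msum k k (carrier G) (\<lambda>h. f (inv x \<otimes> h \<otimes> x) \<cdot>\<^sub>m \<sigma> (x \<otimes> (inv x \<otimes> h \<otimes> x)))"
        by (rule msum_reindex[OF bij_conj[OF x]])
      also have "\<dots> = msum k k (carrier G) (\<lambda>h. f h \<cdot>\<^sub>m \<sigma> (h \<otimes> x))"
      proof (rule msum_cong)
        fix h assume h: "h \<in> carrier G"
        have "f (inv x \<otimes> h \<otimes> inv (inv x)) = f h" using cls h x by blast
        hence "f (inv x \<otimes> h \<otimes> x) = f h" using x by simp
        moreover have "x \<otimes> (inv x \<otimes> h \<otimes> x) = h \<otimes> x" using x h by (simp add: m_assoc[symmetric])
        ultimately show "f (inv x \<otimes> h \<otimes> x) \<cdot>\<^sub>m \<sigma> (x \<otimes> (inv x \<otimes> h \<otimes> x)) = f h \<cdot>\<^sub>m \<sigma> (h \<otimes> x)" by simp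
      qed
      also have "\<dots> = msum k k (carrier G) (\<lambda>h. (f h \<cdot>\<^sub>m \<sigma> h) * \<sigma> x)"
      proof (rule msum_cong)
        fix g assume g: "g \<in> carrier G"
        show "f g \<cdot>\<^sub>m \<sigma> (g \<otimes> x) = (f g \<cdot>\<^sub>m \<sigma> g) * \<sigma> x"
          using mult_smult_assoc_mat[OF sc[OF g] sc[OF x]] rep_mult[OF ss g x] by simp
      qed
      also have "\<dots> = A * \<sigma> x"
        unfolding A_def by (rule mult_msum_right[symmetric, OF sc[OF x]]) (use sc in auto)
      finally show "\<sigma> x * A = A * \<sigma> x" .
    qed
    obtain a where a: "A = a \<cdot>\<^sub>m 1\<^sub>m k" using schur[OF s A comm] by blast
    have "a * of_nat k = mat_trace A" using a trace_smult[of "1\<^sub>m k" k a] by simp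
    also have "\<dots> = (\<Sum>g\<in>carrier G. f g * mat_trace (\<sigma> g))" unfolding A_def by (rule trace_msum_smult[OF ss])
    also have "\<dots> = (\<Sum>g\<in>carrier G. f g * character G \<sigma> g)" by (simp add: character_def)
    also have "\<dots> = 0" using orth s unfolding Irr_def by blast
    finally have "a = 0" using rep_n[OF ss] by simp
    hence "A = 0\<^sub>m k k" using a by (auto intro!: eq_matI)
    thus ?thesis using A_def by simp
  qed
  define F where "F = (\<lambda>g. f (g \<otimes> y))"
  have F0: "\<forall>k \<sigma>. is_irr_rep G k \<sigma> \<longrightarrow> msum k k (carrier G) (\<lambda>g. F g \<cdot>\<^sub>m \<sigma> g) = 0\<^sub>m k k"
  proof (intro allI impI)
    fix k \<sigma> assume s: "is_irr_rep G k \<sigma>"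
    have ss: "is_rep G k \<sigma>" using s unfolding is_irr_rep_def by auto
    note sc = rep_carrier[OF ss]
    have iy: "inv y \<in> carrier G" using y by simp
    have "msum k k (carrier G) (\<lambda>g. F g \<cdot>\<^sub>m \<sigma> g) =
        msum k k (carrier G) (\<lambda>h. F (h \<otimes> inv y) \<cdot>\<^sub>m \<sigma> (h \<otimes> inv y))"
      by (rule msum_reindex[OF bij_rmult[OF iy]])
    also have "\<dots> = msum k k (carrier G) (\<lambda>h. (f h \<cdot>\<^sub>m \<sigma> h) * \<sigma> (inv y))"
    proof (rule msum_cong)
      fix h assume h: "h \<in> carrier G"
      have "F (h \<otimes> inv y) = f h" unfolding F_def using h y by (simp add: m_assoc)
      thus "F (h \<otimes> inv y) \<cdot>\<^sub>m \<sigma> (h \<otimes> inv y) = (f h \<cdot>\<^sub>m \<sigma> h) * \<sigma> (inv y)"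
        using rep_mult[OF ss h iy] mult_smult_assoc_mat[OF sc[OF h] sc[OF iy]] by simp
    qed
    also have "\<dots> = msum k k (carrier G) (\<lambda>h. f h \<cdot>\<^sub>m \<sigma> h) * \<sigma> (inv y)"
      by (rule mult_msum_right[symmetric, OF sc[OF iy]]) (use sc in auto)
    also have "\<dots> = 0\<^sub>m k k" using A0[OF s] sc[OF iy] by simp
    finally show "msum k k (carrier G) (\<lambda>g. F g \<cdot>\<^sub>m \<sigma> g) = 0\<^sub>m k k" .
  qed
  obtain R where R: "is_rep G NG R" "\<forall>g\<in>carrier G. mat_trace (R g) = (if g = \<one> then of_nat NG else 0)"
    using regular_rep by blast
  have "0 = (\<Sum>g\<in>carrier G. F g * mat_trace (R g))" using tr_zero_all_reps[OF F0 R(1)] by simp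
  also have "\<dots> = (\<Sum>g\<in>carrier G. if g = \<one> then F g * of_nat NG else 0)"
    by (rule sum.cong[OF refl]) (use R(2) in auto)
  also have "\<dots> = F \<one> * of_nat NG" using fin by simp
  also have "\<dots> = f y * of_nat NG" unfolding F_def using y by simp
  finally show ?thesis using NG_pos by simp
qed

end


context fgroup
begin

lemma conj_class_sub: "conj_class G h0 \<subseteq> carrier G" if "h0 \<in> carrier G"
  using that unfolding conj_class_def by auto

lemma conj_class_self: "h0 \<in> carrier G \<Longrightarrow> h0 \<in> conj_class G h0"
  unfolding conj_class_def by (rule CollectI, rule exI[of _ \<one>]) auto

lemma conj_class_finite: "h0 \<in> carrier G \<Longrightarrow> finite (conj_class G h0)"
  using conj_class_sub[of h0] fin finite_subset by auto

lemma conj_class_card: "h0 \<in> carrier G \<Longrightarrow> card (conj_class G h0) \<ge> 1"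
proof -
  assume h0: "h0 \<in> carrier G"
  have "card (conj_class G h0) > 0" using conj_class_finite[OF h0] conj_class_self[OF h0] card_gt_0_iff by blast
  thus ?thesis by simp
qed

lemma conj_class_one: "conj_class G \<one> = {\<one>}"
proof
  show "conj_class G \<one> \<subseteq> {\<one>}" unfolding conj_class_def by auto
  have "\<one> = \<one> \<otimes> \<one> \<otimes> inv \<one>" by simp
  thus "{\<one>} \<subseteq> conj_class G \<one>" unfolding conj_class_def by blast
qed

lemma conj_class_conj:
  assumes h0: "h0 \<in> carrier G" and x: "x \<in> carrier G" and g: "g \<in> carrier G"
  shows "x \<otimes> g \<otimes> inv x \<in> conj_class G h0 \<longleftrightarrow> g \<in> conj_class G h0"
proof
  assume "g \<in> conj_class G h0"
  then obtain a where a: "a \<in> carrier G" "g = a \<otimes> h0 \<otimes> inv a" unfolding conj_class_def by auto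
  have "x \<otimes> g \<otimes> inv x = (x \<otimes> a) \<otimes> h0 \<otimes> inv (x \<otimes> a)"
    using a x h0 by (simp add: m_assoc inv_mult_group)
  thus "x \<otimes> g \<otimes> inv x \<in> conj_class G h0" using a x unfolding conj_class_def by blast
next
  assume "x \<otimes> g \<otimes> inv x \<in> conj_class G h0"
  then obtain a where a: "a \<in> carrier G" "x \<otimes> g \<otimes> inv x = a \<otimes> h0 \<otimes> inv a" unfolding conj_class_def by auto
  have "g = inv x \<otimes> (x \<otimes> g \<otimes> inv x) \<otimes> x"
    using x g by (simp add: m_assoc cancel_l2)
  also have "\<dots> = (inv x \<otimes> a) \<otimes> h0 \<otimes> inv (inv x \<otimes> a)"
    using a x h0 by (simp add: m_assoc inv_mult_group)
  finally show "g \<in> conj_class G h0" using a x unfolding conj_class_def by blast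
qed

lemma Irr_const_on_class:
  assumes chi: "\<chi> \<in> Irr G" and h0: "h0 \<in> carrier G" and g: "g \<in> conj_class G h0"
  shows "\<chi> g = \<chi> h0"
proof -
  obtain a where a: "a \<in> carrier G" "g = a \<otimes> h0 \<otimes> inv a" using g unfolding conj_class_def by auto
  thus ?thesis using Irr_facts(6)[OF chi h0 a(1)] by simp
qed

lemma bij_inv: "bij_betw (\<lambda>g. inv g) (carrier G) (carrier G)"
  by (rule bij_betwI[where g = "\<lambda>g. inv g"]) auto

lemma col_orth:
  assumes h0: "h0 \<in> carrier G" and h: "h \<in> carrier G"
  shows "(\<Sum>\<chi>\<in>Irr G. cnj (\<chi> h0) * \<chi> h) =
    (if h \<in> conj_class G h0 then of_nat NG / of_nat (card (conj_class G h0)) else 0)"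
proof -
  define K where "K = conj_class G h0"
  define k where "k = card K"
  have K: "K \<subseteq> carrier G" "finite K" "k \<ge> 1" unfolding K_def k_def
    using conj_class_sub[OF h0] conj_class_finite[OF h0] conj_class_card[OF h0] by auto
  define c where "c = (\<lambda>\<chi>::'a \<Rightarrow> complex. of_nat k / of_nat NG * cnj (\<chi> h0))"
  define f where "f = (\<lambda>g. (if g \<in> K then 1 else 0) - (\<Sum>\<chi>\<in>Irr G. c \<chi> * \<chi> g))"
  define fh where "fh = (\<lambda>g. f (inv g))"
  have orth: "\<forall>\<psi>\<in>Irr G. (\<Sum>g\<in>carrier G. fh g * \<psi> g) = 0"
  proof
    fix \<psi> assume psi: "\<psi> \<in> Irr G"
    have "(\<Sum>g\<in>carrier G. fh g * \<psi> g) = (\<Sum>g\<in>carrier G. f (inv g) * \<psi> (inv (inv g)))"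
      unfolding fh_def by (rule sum.cong[OF refl]) simp
    also have "\<dots> = (\<Sum>g\<in>carrier G. f g * \<psi> (inv g))"
      using sum.reindex_bij_betw[OF bij_inv, of "\<lambda>g. f g * \<psi> (inv g)"] by simp
    also have "\<dots> = (\<Sum>g\<in>carrier G. f g * cnj (\<psi> g))"
      by (rule sum.cong[OF refl]) (simp add: Irr_facts(1)[OF psi])
    also have "\<dots> = (\<Sum>g\<in>carrier G. (if g \<in> K then cnj (\<psi> g) else 0)) -
        (\<Sum>g\<in>carrier G. \<Sum>\<chi>\<in>Irr G. c \<chi> * (\<chi> g * cnj (\<psi> g)))"
    proof -
      have "\<And>g. f g * cnj (\<psi> g) = (if g \<in> K then cnj (\<psi> g) else 0) - (\<Sum>\<chi>\<in>Irr G. c \<chi> * (\<chi> g * cnj (\<psi> g)))"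
        unfolding f_def left_diff_distrib sum_distrib_right by (simp add: mult.assoc)
      thus ?thesis by (simp only: sum_subtractf)
    qed
    also have "(\<Sum>g\<in>carrier G. (if g \<in> K then cnj (\<psi> g) else 0)) = (\<Sum>g\<in>K. cnj (\<psi> g))"
      using K fin by (simp add: sum.If_cases Int_absorb1)
    also have "\<dots> = (\<Sum>g\<in>K. cnj (\<psi> h0))"
      by (rule sum.cong[OF refl]) (use Irr_const_on_class[OF psi h0] K_def in auto)
    also have "\<dots> = of_nat k * cnj (\<psi> h0)" unfolding k_def by simp
    also have "(\<Sum>g\<in>carrier G. \<Sum>\<chi>\<in>Irr G. c \<chi> * (\<chi> g * cnj (\<psi> g))) =
        (\<Sum>\<chi>\<in>Irr G. c \<chi> * (\<Sum>g\<in>carrier G. \<chi> g * cnj (\<psi> g)))"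
      unfolding sum_distrib_left by (rule sum.swap)
    also have "\<dots> = (\<Sum>\<chi>\<in>Irr G. if \<chi> = \<psi> then c \<chi> * of_nat NG else 0)"
      by (rule sum.cong[OF refl]) (simp add: Irr_orth psi)
    also have "\<dots> = c \<psi> * of_nat NG" using Irr_finite psi by simp
    also have "\<dots> = of_nat k * cnj (\<psi> h0)" unfolding c_def using NG_pos by simp
    finally show "(\<Sum>g\<in>carrier G. fh g * \<psi> g) = 0" by simp
  qed
  have fcls: "f (x \<otimes> g \<otimes> inv x) = f g" if x: "x \<in> carrier G" and g: "g \<in> carrier G" for x g
  proof -
    have "(x \<otimes> g \<otimes> inv x \<in> K) = (g \<in> K)" unfolding K_def by (rule conj_class_conj[OF h0 x g])
    moreover have "(\<Sum>\<chi>\<in>Irr G. c \<chi> * \<chi> (x \<otimes> g \<otimes> inv x)) = (\<Sum>\<chi>\<in>Irr G. c \<chi> * \<chi> g)"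
      by (rule sum.cong[OF refl]) (use Irr_facts(6) g x in auto)
    ultimately show ?thesis unfolding f_def by simp
  qed
  have cls: "\<forall>g\<in>carrier G. \<forall>x\<in>carrier G. fh (x \<otimes> g \<otimes> inv x) = fh g"
  proof (intro ballI)
    fix g x assume g: "g \<in> carrier G" and x: "x \<in> carrier G"
    have "inv (x \<otimes> g \<otimes> inv x) = x \<otimes> inv g \<otimes> inv x" using g x by (simp add: inv_mult_group m_assoc)
    thus "fh (x \<otimes> g \<otimes> inv x) = fh g" unfolding fh_def using fcls[OF x inv_closed[OF g]] by simp
  qed
  have "fh (inv h) = 0" by (rule completeness[OF orth cls inv_closed[OF h]])
  hence f0: "f h = 0" unfolding fh_def using h by simp
  hence "(if h \<in> K then 1 else 0) = (\<Sum>\<chi>\<in>Irr G. c \<chi> * \<chi> h)" unfolding f_def by simp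
  also have "\<dots> = of_nat k / of_nat NG * (\<Sum>\<chi>\<in>Irr G. cnj (\<chi> h0) * \<chi> h)"
    unfolding c_def by (simp add: sum_distrib_left mult.assoc)
  finally have "(\<Sum>\<chi>\<in>Irr G. cnj (\<chi> h0) * \<chi> h) = of_nat NG / of_nat k * (if h \<in> K then 1 else 0)"
    using K(3) NG_pos by (simp add: field_simps)
  thus ?thesis unfolding K_def k_def by simp
qed

end


lemma amgm:
  fixes a b t :: real
  assumes t: "t > 0"
  shows "a * b \<le> (t * a^2 + b^2 / t) / 2"
proof -
  have "0 \<le> (t * a - b)^2" by simp
  hence "2 * t * (a * b) \<le> t^2 * a^2 + b^2" by (simp add: power2_eq_square algebra_simps)
  hence "2 * t * (a * b) / (2 * t) \<le> (t^2 * a^2 + b^2) / (2 * t)" using t by (intro divide_right_mono) auto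
  also have "2 * t * (a * b) / (2 * t) = a * b" using t by simp
  also have "(t^2 * a^2 + b^2) / (2 * t) = (t * a^2 + b^2 / t) / 2" using t by (simp add: field_simps power2_eq_square)
  finally show ?thesis .
qed

context fgroup
begin

lemma sum_sq_col:
  assumes h: "h \<in> carrier G"
  shows "(\<Sum>\<chi>\<in>Irr G. (cmod (\<chi> h))^2) = real NG / real (card (conj_class G h))"
proof -
  have "complex_of_real (\<Sum>\<chi>\<in>Irr G. (cmod (\<chi> h))^2) = (\<Sum>\<chi>\<in>Irr G. cnj (\<chi> h) * \<chi> h)"
    unfolding of_real_sum by (rule sum.cong[OF refl]) (metis complex_norm_square mult.commute)
  also have "\<dots> = of_nat NG / of_nat (card (conj_class G h))" using col_orth[OF h h] conj_class_self[OF h] by simp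
  also have "\<dots> = complex_of_real (real NG / real (card (conj_class G h)))" by simp
  finally show ?thesis by (metis of_real_eq_iff)
qed

lemma sum_sq_one: "(\<Sum>\<chi>\<in>Irr G. (cmod (\<chi> \<one>))^2) = real NG"
  using sum_sq_col[OF one_closed] conj_class_one by simp

lemma DH_lower:
  assumes H: "H \<subseteq> carrier G" and h0: "h0 \<in> H" and h01: "h0 \<noteq> \<one>"
  shows "D_H G H \<ge> 1 / real (card (conj_class G h0))"
proof -
  define S where "S = H - {\<one>}"
  define K where "K = conj_class G h0"
  define k where "k = card K"
  have h0G: "h0 \<in> carrier G" using H h0 by auto
  have k1: "k \<ge> 1" unfolding k_def K_def by (rule conj_class_card[OF h0G])
  have SG: "S \<subseteq> carrier G" using H unfolding S_def by auto
  have finS: "finite S" using SG fin finite_subset by auto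
  have "(\<Sum>\<chi>\<in>Irr G. cnj (\<chi> h0) * (\<Sum>h\<in>S. \<chi> h)) = (\<Sum>\<chi>\<in>Irr G. \<Sum>h\<in>S. cnj (\<chi> h0) * \<chi> h)"
    by (simp add: sum_distrib_left)
  also have "\<dots> = (\<Sum>h\<in>S. \<Sum>\<chi>\<in>Irr G. cnj (\<chi> h0) * \<chi> h)" by (rule sum.swap)
  also have "\<dots> = (\<Sum>h\<in>S. if h \<in> K then of_nat NG / of_nat k else 0)"
    by (rule sum.cong[OF refl]) (use col_orth[OF h0G] SG in \<open>auto simp: K_def k_def\<close>)
  also have "\<dots> = of_nat (card (S \<inter> K)) * (of_nat NG / of_nat k)"
    using finS by (simp add: sum.If_cases)
  finally have e: "(\<Sum>\<chi>\<in>Irr G. cnj (\<chi> h0) * (\<Sum>h\<in>S. \<chi> h)) = complex_of_real (real (card (S \<inter> K)) * (real NG / real k))"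
    by simp
  have "h0 \<in> S \<inter> K" unfolding S_def K_def using h0 h01 conj_class_self[OF h0G] by auto
  hence cSK: "card (S \<inter> K) \<ge> 1" using finS by (metis One_nat_def Suc_leI card_gt_0_iff empty_iff finite_Int)
  have nn: "0 \<le> real (card (S \<inter> K)) * (real NG / real k)" by simp
  have eq2: "real (card (S \<inter> K)) * (real NG / real k) = cmod (\<Sum>\<chi>\<in>Irr G. cnj (\<chi> h0) * (\<Sum>h\<in>S. \<chi> h))"
    unfolding e norm_of_real abs_of_nonneg[OF nn] ..
  have "real NG / real k = 1 * (real NG / real k)" by simp
  also have "\<dots> \<le> real (card (S \<inter> K)) * (real NG / real k)"
    by (rule mult_right_mono) (use cSK in auto)
  also have "\<dots> = cmod (\<Sum>\<chi>\<in>Irr G. cnj (\<chi> h0) * (\<Sum>h\<in>S. \<chi> h))" by (rule eq2)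
  also have "\<dots> \<le> (\<Sum>\<chi>\<in>Irr G. cmod (cnj (\<chi> h0) * (\<Sum>h\<in>S. \<chi> h)))" by (rule norm_sum)
  also have "\<dots> \<le> (\<Sum>\<chi>\<in>Irr G. cmod (\<chi> \<one>) * cmod (\<Sum>h\<in>S. \<chi> h))"
  proof (rule sum_mono)
    fix \<chi> assume chi: "\<chi> \<in> Irr G"
    show "cmod (cnj (\<chi> h0) * (\<Sum>h\<in>S. \<chi> h)) \<le> cmod (\<chi> \<one>) * cmod (\<Sum>h\<in>S. \<chi> h)"
      using Irr_facts(3)[OF chi h0G] by (simp add: norm_mult mult_right_mono)
  qed
  finally have "real NG / real k \<le> (\<Sum>\<chi>\<in>Irr G. cmod (\<chi> \<one>) * cmod (\<Sum>h\<in>S. \<chi> h))" .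
  hence "1 / real NG * (real NG / real k) \<le> 1 / real NG * (\<Sum>\<chi>\<in>Irr G. cmod (\<chi> \<one>) * cmod (\<Sum>h\<in>S. \<chi> h))"
    by (intro mult_left_mono) auto
  thus ?thesis unfolding D_H_def S_def K_def k_def using NG_pos by simp
qed

lemma DH_upper:
  assumes H: "H \<subseteq> carrier G"
  shows "D_H G H \<le> (\<Sum>h\<in>H - {\<one>}. 1 / sqrt (real (card (conj_class G h))))"
proof -
  define S where "S = H - {\<one>}"
  have SG: "S \<subseteq> carrier G" using H unfolding S_def by auto
  have finS: "finite S" using SG fin finite_subset by auto
  have per: "(\<Sum>\<chi>\<in>Irr G. cmod (\<chi> \<one>) * cmod (\<chi> h)) \<le> real NG / sqrt (real (card (conj_class G h)))"
    if h: "h \<in> carrier G" for h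
  proof -
    define k where "k = real (card (conj_class G h))"
    have k1: "k \<ge> 1" unfolding k_def using conj_class_card[OF h] by simp
    define s where "s = sqrt k"
    have s0: "s > 0" unfolding s_def using k1 by simp
    have ss: "s * s = k" unfolding s_def using k1 by simp
    define t where "t = 1 / s"
    have t0: "t > 0" unfolding t_def using s0 by simp
    have "(\<Sum>\<chi>\<in>Irr G. cmod (\<chi> \<one>) * cmod (\<chi> h)) \<le>
        (\<Sum>\<chi>\<in>Irr G. (t * (cmod (\<chi> \<one>))^2 + (cmod (\<chi> h))^2 / t) / 2)"
      by (rule sum_mono) (rule amgm[OF t0])
    also have "\<dots> = (t * (\<Sum>\<chi>\<in>Irr G. (cmod (\<chi> \<one>))^2) + (\<Sum>\<chi>\<in>Irr G. (cmod (\<chi> h))^2) / t) / 2"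
    proof -
      have "(\<Sum>\<chi>\<in>Irr G. (t * (cmod (\<chi> \<one>))^2 + (cmod (\<chi> h))^2 / t) / 2) =
          ((\<Sum>\<chi>\<in>Irr G. t * (cmod (\<chi> \<one>))^2) + (\<Sum>\<chi>\<in>Irr G. (cmod (\<chi> h))^2 / t)) / 2"
        by (simp only: sum_divide_distrib[symmetric] sum.distrib)
      also have "(\<Sum>\<chi>\<in>Irr G. t * (cmod (\<chi> \<one>))^2) = t * (\<Sum>\<chi>\<in>Irr G. (cmod (\<chi> \<one>))^2)"
        by (simp only: sum_distrib_left)
      also have "(\<Sum>\<chi>\<in>Irr G. (cmod (\<chi> h))^2 / t) = (\<Sum>\<chi>\<in>Irr G. (cmod (\<chi> h))^2) / t"
        by (simp only: sum_divide_distrib)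
      finally show ?thesis .
    qed
    also have "\<dots> = (t * real NG + (real NG / k) / t) / 2"
      unfolding sum_sq_one sum_sq_col[OF h] k_def ..
    also have "\<dots> = real NG / s"
      unfolding t_def using s0 ss[symmetric] by (simp add: field_simps)
    finally show ?thesis unfolding s_def k_def .
  qed
  have "(\<Sum>\<chi>\<in>Irr G. cmod (\<chi> \<one>) * cmod (\<Sum>h\<in>S. \<chi> h)) \<le> (\<Sum>\<chi>\<in>Irr G. cmod (\<chi> \<one>) * (\<Sum>h\<in>S. cmod (\<chi> h)))"
    by (intro sum_mono mult_left_mono norm_sum) auto
  also have "\<dots> = (\<Sum>h\<in>S. \<Sum>\<chi>\<in>Irr G. cmod (\<chi> \<one>) * cmod (\<chi> h))"
    unfolding sum_distrib_left by (rule sum.swap)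
  also have "\<dots> \<le> (\<Sum>h\<in>S. real NG / sqrt (real (card (conj_class G h))))"
    by (rule sum_mono) (use per SG in auto)
  finally have "1 / real NG * (\<Sum>\<chi>\<in>Irr G. cmod (\<chi> \<one>) * cmod (\<Sum>h\<in>S. \<chi> h)) \<le>
      1 / real NG * (\<Sum>h\<in>S. real NG / sqrt (real (card (conj_class G h))))"
    by (intro mult_left_mono) auto
  also have "\<dots> = (\<Sum>h\<in>S. 1 / sqrt (real (card (conj_class G h))))"
    using NG_pos by (simp add: sum_distrib_left)
  finally show ?thesis unfolding D_H_def S_def .
qed

end


lemma fgroupI: "group G \<Longrightarrow> finite (carrier G) \<Longrightarrow> fgroup G"
  by (simp add: fgroup_def fgroup_axioms_def)

theorem theorem6:
  fixes I :: "nat set" and G :: "nat \<Rightarrow> ('a, 'b) monoid_scheme" and H :: "nat \<Rightarrow> 'a set"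
    and c :: real
  assumes "infinite I" and "\<forall>i \<in> I. i > 0"
    and "\<forall>i \<in> I. group (G i) \<and> finite (carrier (G i)) \<and> subgroup (H i) (G i)"
    and "\<forall>M. \<exists>N. \<forall>i \<in> I. i \<ge> N \<longrightarrow> card (carrier (G i)) \<ge> M"
    and "c > 0"
    and "\<forall>i \<in> I. real (card (H i)) \<le> (ln (real (card (carrier (G i))))) powr c"
  shows "distinguishable I G H \<longleftrightarrow>
    (\<exists>c'>0. \<exists>N. \<forall>i \<in> I. i \<ge> N \<longrightarrow>
       (\<exists>h \<in> H i. h \<noteq> \<one>\<^bsub>G i\<^esub> \<and>
          real (card (conj_class (G i) h)) \<le> (ln (real (card (carrier (G i))))) powr c'))"
proof -
  have fg: "\<And>i. i \<in> I \<Longrightarrow> fgroup (G i)" using assms(3) fgroupI by blast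
  have sg: "\<And>i. i \<in> I \<Longrightarrow> subgroup (H i) (G i)" using assms(3) by blast
  define L where "L = (\<lambda>i. ln (real (card (carrier (G i)))))"
  have Hsub: "\<And>i. i \<in> I \<Longrightarrow> H i \<subseteq> carrier (G i)" using sg subgroup.subset by blast
  have Hfin: "\<And>i. i \<in> I \<Longrightarrow> finite (H i)"
    using Hsub assms(3) finite_subset by blast
  have Hcard: "\<And>i. i \<in> I \<Longrightarrow> card (H i) \<ge> 1"
  proof -
    fix i assume i: "i \<in> I"
    have "\<one>\<^bsub>G i\<^esub> \<in> H i" using sg[OF i] subgroup.one_closed by blast
    hence "card (H i) > 0" using Hfin[OF i] card_gt_0_iff by blast
    thus "card (H i) \<ge> 1" by simp
  qed
  have L1: "\<And>i. i \<in> I \<Longrightarrow> L i \<ge> 1"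
  proof -
    fix i assume i: "i \<in> I"
    have "1 \<le> real (card (H i))" using Hcard[OF i] by simp
    also have "\<dots> \<le> L i powr c" using assms(6) i unfolding L_def by blast
    finally have Lc: "1 \<le> L i powr c" .
    have "card (carrier (G i)) \<ge> 1" using fgroup.NG_pos[OF fg[OF i]] by simp
    hence L0: "L i \<ge> 0" unfolding L_def by simp
    show "L i \<ge> 1"
    proof (rule ccontr)
      assume "\<not> L i \<ge> 1" hence "L i < 1" by simp
      hence "L i powr c < 1 powr c" using powr_less_mono2[OF assms(5) L0] by blast
      thus False using Lc by simp
    qed
  qed
  show ?thesis
  proof
    assume "distinguishable I G H"
    then obtain c'' N where c'': "c'' > 0" and D: "\<forall>i \<in> I. i \<ge> N \<longrightarrow> D_H (G i) (H i) \<ge> L i powr (- c'')"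
      unfolding distinguishable_def L_def by blast
    define c' where "c' = 2 * c + 2 * c'' + 1"
    have c'0: "c' > 0" unfolding c'_def using assms(5) c'' by simp
    have "\<forall>i \<in> I. i \<ge> N \<longrightarrow>
       (\<exists>h \<in> H i. h \<noteq> \<one>\<^bsub>G i\<^esub> \<and> real (card (conj_class (G i) h)) \<le> L i powr c')"
    proof (intro ballI impI)
      fix i assume i: "i \<in> I" and iN: "i \<ge> N"
      show "\<exists>h \<in> H i. h \<noteq> \<one>\<^bsub>G i\<^esub> \<and> real (card (conj_class (G i) h)) \<le> L i powr c'"
      proof (rule ccontr)
        assume "\<not> ?thesis"
        hence big: "\<And>h. h \<in> H i - {\<one>\<^bsub>G i\<^esub>} \<Longrightarrow> real (card (conj_class (G i) h)) > L i powr c'" by force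
        define S where "S = H i - {\<one>\<^bsub>G i\<^esub>}"
        have finS: "finite S" unfolding S_def using Hfin[OF i] by simp
        have Li: "L i \<ge> 1" by (rule L1[OF i])
        have Dup: "D_H (G i) (H i) \<le> (\<Sum>h\<in>S. 1 / sqrt (real (card (conj_class (G i) h))))"
          unfolding S_def by (rule fgroup.DH_upper[OF fg[OF i] Hsub[OF i]])
        have Dlo: "D_H (G i) (H i) \<ge> L i powr (- c'')" using D i iN by blast
        have pos: "L i powr (- c'') > 0" using Li by simp
        show False
        proof (cases "S = {}")
          case True
          thus False using Dup Dlo pos by simp
        next
          case False
          have "(\<Sum>h\<in>S. 1 / sqrt (real (card (conj_class (G i) h)))) < (\<Sum>h\<in>S. L i powr (- (c' / 2)))"
          proof (rule sum_strict_mono[OF finS False])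
            fix h assume h: "h \<in> S"
            have "L i powr (c' / 2) = sqrt (L i powr c')" using Li by (simp add: powr_half_sqrt_powr)
            also have "\<dots> < sqrt (real (card (conj_class (G i) h)))" using big h unfolding S_def by simp
            finally have lt: "L i powr (c' / 2) < sqrt (real (card (conj_class (G i) h)))" .
            have p: "L i powr (c' / 2) > 0" using Li by simp
            have "1 / sqrt (real (card (conj_class (G i) h))) < 1 / L i powr (c' / 2)"
            proof (rule divide_strict_left_mono[OF lt])
              have "sqrt (real (card (conj_class (G i) h))) > 0" using lt p by linarith
              thus "0 < sqrt (real (card (conj_class (G i) h))) * L i powr (c' / 2)" using p by simp
            qed simp
            thus "1 / sqrt (real (card (conj_class (G i) h))) < L i powr (- (c' / 2))"
              by (simp add: powr_minus_divide)
          qed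
          also have "\<dots> = real (card S) * L i powr (- (c' / 2))" by simp
          also have "\<dots> \<le> real (card (H i)) * L i powr (- (c' / 2))"
          proof (rule mult_right_mono)
            have "card S \<le> card (H i)" unfolding S_def using Hfin[OF i] by (simp add: card_mono)
            thus "real (card S) \<le> real (card (H i))" by simp
          qed simp
          also have "\<dots> \<le> L i powr c * L i powr (- (c' / 2))"
            by (rule mult_right_mono) (use assms(6) i L_def in auto)
          also have "\<dots> = L i powr (c - c' / 2)" by (simp add: powr_add[symmetric])
          also have "\<dots> \<le> L i powr (- c'')"
          proof (rule powr_mono)
            show "c - c' / 2 \<le> - c''" unfolding c'_def by (simp add: field_simps)
          qed (use Li in auto)
          finally show False using Dup Dlo by simp
        qed
      qed
    qed
    thus "\<exists>c'>0. \<exists>N. \<forall>i \<in> I. i \<ge> N \<longrightarrow>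
       (\<exists>h \<in> H i. h \<noteq> \<one>\<^bsub>G i\<^esub> \<and>
          real (card (conj_class (G i) h)) \<le> (ln (real (card (carrier (G i))))) powr c')"
      using c'0 unfolding L_def by blast
  next
    assume "\<exists>c'>0. \<exists>N. \<forall>i \<in> I. i \<ge> N \<longrightarrow>
       (\<exists>h \<in> H i. h \<noteq> \<one>\<^bsub>G i\<^esub> \<and>
          real (card (conj_class (G i) h)) \<le> (ln (real (card (carrier (G i))))) powr c')"
    then obtain c' N where c'0: "c' > 0" and R: "\<forall>i \<in> I. i \<ge> N \<longrightarrow>
       (\<exists>h \<in> H i. h \<noteq> \<one>\<^bsub>G i\<^esub> \<and> real (card (conj_class (G i) h)) \<le> L i powr c')"
      unfolding L_def by blast
    have "\<forall>i \<in> I. i \<ge> N \<longrightarrow> D_H (G i) (H i) \<ge> L i powr (- c')"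
    proof (intro ballI impI)
      fix i assume i: "i \<in> I" and iN: "i \<ge> N"
      obtain h where h: "h \<in> H i" "h \<noteq> \<one>\<^bsub>G i\<^esub>" and hc: "real (card (conj_class (G i) h)) \<le> L i powr c'"
        using R i iN by blast
      have hG: "h \<in> carrier (G i)" using h Hsub[OF i] by auto
      have k1: "real (card (conj_class (G i) h)) \<ge> 1" using fgroup.conj_class_card[OF fg[OF i] hG] by simp
      have "L i powr (- c') = 1 / L i powr c'" by (simp add: powr_minus_divide)
      also have "\<dots> \<le> 1 / real (card (conj_class (G i) h))"
      proof (rule divide_left_mono[OF hc])
        have "L i powr c' > 0" using hc k1 by linarith
        thus "0 < L i powr c' * real (card (conj_class (G i) h))" using k1 by simp
      qed simp
      also have "\<dots> \<le> D_H (G i) (H i)" by (rule fgroup.DH_lower[OF fg[OF i] Hsub[OF i] h])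
      finally show "D_H (G i) (H i) \<ge> L i powr (- c')" .
    qed
    thus "distinguishable I G H" unfolding distinguishable_def L_def using c'0 by blast
  qed
qed


end
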